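(* Let $(X,\mathcal{A},\mu,T)$ be an ergodic probability-preserving system and $(E_k)_{k\geq1}$ a sequence in $\mathcal{A}$ with $\mu(E_k)>0$ for all $k$ and $\mu(E_k)\to0$. Let $Y\in\mathcal{A}$ with $\mu(Y)>0$, and let $(E_k')_{k\geq1}$ be a sequence of measurable sets with $E_k'\subseteq Y$ such that for every $k\geq1$, points of $Y$ can only reach $E_k$ via $E_k'$. Let $\mathsf{R}$ be any random variable with values in $[0,\infty]$. (a) If $\mu(E_k')\,(\varphi_{E_k}-\varphi_{E_k'})\to0$ in $\mu_Y$-measure as $k\to\infty$, then $\mu(E_k')\to0$, and $$\mu_Y(E_k')\,\varphi^Y_{E_k'}\ \text{converges in law to}\ \mathsf{R}\ \text{on the probability space } (X,\mathcal{A},\mu_Y)$$ holds if and only if $$\mu(E_k')\,\varphi_{E_k}\ \text{converges in law to}\ \mathsf{R}\ \text{on the probability space } (X,\mathcal{A},\mu),$$ as $k\to\infty$. (b) If there exists a constant $M\geq0$ such that $E_k'\subseteq\bigcup_{m=0}^{M}T^{-m}E_k$ for all $k\geq1$, then $\mu(E_k')\,(\varphi_{E_k}-\varphi_{E_k'})\to0$ in $\mu_Y$-measure as $k\to\infty$.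
   Context: A measure preserving transformation $T$ of $(X,\mathcal{A},\mu)$ is a measurable map with $\mu\circ T^{-1}=\mu$ (possibly non-invertible). For $A\in\mathcal{A}$, the first hitting time is $\varphi_A(x):=\min\{n\geq1:T^nx\in A\}$ (with $\min\emptyset=\infty$). For $Y$ with $\mu(Y)>0$, $\mu_Y(B):=\mu(Y\cap B)/\mu(Y)$, the first return map is $T_Y x:=T^{\varphi_Y(x)}x$, and for $E\subseteq Y$ measurable the induced hitting time is $\varphi^Y_E(x):=\inf\{j\geq1: T_Y^j x\in E\}$, $x\in Y$. "Points of $Y$ can only reach $E$ via $E'$" means: for every $n\geq0$ and a.e. $x\in Y$, if $T^nx\in E$ then $T^jx\in E'$ for some $j\in\{0,\dots,n\}$. Convergence in law of $[0,\infty)$-valued functions to a $[0,\infty]$-valued $\mathsf{R}$ means convergence of distribution functions at all continuity points $t$ of $t\mapsto\Pr[\mathsf{R}\leq t]$. *)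

theory Defs
  imports "HOL-Probability.Probability"
begin

definition mpt :: "'a measure \<Rightarrow> ('a \<Rightarrow> 'a) \<Rightarrow> bool" where
  "mpt M T \<longleftrightarrow> T \<in> M \<rightarrow>\<^sub>M M \<and> distr M M T = M"

definition ergodic_pps :: "'a measure \<Rightarrow> ('a \<Rightarrow> 'a) \<Rightarrow> bool" where
  "ergodic_pps M T \<longleftrightarrow> prob_space M \<and> mpt M T \<and>
     (\<forall>A \<in> sets M. T -` A \<inter> space M = A \<longrightarrow> measure M A = 0 \<or> measure M A = 1)"

definition hit :: "('a \<Rightarrow> 'a) \<Rightarrow> 'a set \<Rightarrow> 'a \<Rightarrow> enat" where
  "hit S A x = (if \<exists>n\<ge>1. (S ^^ n) x \<in> A then enat (LEAST n. n \<ge> 1 \<and> (S ^^ n) x \<in> A) else \<infinity>)"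

text \<open>First return map to Y (set to the identity where there is no return; irrelevant a.e.).\<close>
definition return_map :: "('a \<Rightarrow> 'a) \<Rightarrow> 'a set \<Rightarrow> 'a \<Rightarrow> 'a" where
  "return_map T Y x = (case hit T Y x of enat n \<Rightarrow> (T ^^ n) x | \<infinity> \<Rightarrow> x)"

definition ind_hit :: "('a \<Rightarrow> 'a) \<Rightarrow> 'a set \<Rightarrow> 'a set \<Rightarrow> 'a \<Rightarrow> enat" where
  "ind_hit T Y E = hit (return_map T Y) E"

definition reach_only_via :: "'a measure \<Rightarrow> ('a \<Rightarrow> 'a) \<Rightarrow> 'a set \<Rightarrow> 'a set \<Rightarrow> 'a set \<Rightarrow> bool" where
  "reach_only_via M T Y E E' \<longleftrightarrow>
     (\<forall>n. AE x in M. x \<in> Y \<longrightarrow> (T ^^ n) x \<in> E \<longrightarrow> (\<exists>j\<le>n. (T ^^ j) x \<in> E'))"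

definition scale :: "real \<Rightarrow> enat \<Rightarrow> ereal" where
  "scale c h = ereal c * (case h of enat n \<Rightarrow> ereal (real n) | \<infinity> \<Rightarrow> \<infinity>)"

text \<open>c * (a - b) for hitting times a, b; set to \<infinity> where either time is infinite
  (such points are counted as "not close to 0").\<close>
definition scaled_diff :: "real \<Rightarrow> enat \<Rightarrow> enat \<Rightarrow> ereal" where
  "scaled_diff c a b = (case (a, b) of (enat m, enat n) \<Rightarrow> ereal (c * (real m - real n)) | _ \<Rightarrow> \<infinity>)"

definition tendsto_zero_in_measure :: "'a measure \<Rightarrow> (nat \<Rightarrow> 'a \<Rightarrow> ereal) \<Rightarrow> bool" where
  "tendsto_zero_in_measure P f \<longleftrightarrow>
     (\<forall>\<epsilon>>0. (\<lambda>k. measure P {x \<in> space P. \<not> (\<bar>f k x\<bar> < ereal \<epsilon>)}) \<longlonglongrightarrow> 0)"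

definition dist_fun :: "'b measure \<Rightarrow> ('b \<Rightarrow> ereal) \<Rightarrow> real \<Rightarrow> real" where
  "dist_fun N R t = measure N {\<omega> \<in> space N. R \<omega> \<le> ereal t}"

definition conv_in_law :: "'a measure \<Rightarrow> (nat \<Rightarrow> 'a \<Rightarrow> ereal) \<Rightarrow> 'b measure \<Rightarrow> ('b \<Rightarrow> ereal) \<Rightarrow> bool" where
  "conv_in_law P f N R \<longleftrightarrow>
     (\<forall>t. isCont (dist_fun N R) t \<longrightarrow>
        (\<lambda>k. measure P {x \<in> space P. f k x \<le> ereal t}) \<longlonglongrightarrow> dist_fun N R t)"

end

theory Submission
  imports Defs
begin



lemma funpow_meas: "S \<in> M \<rightarrow>\<^sub>M M \<Longrightarrow> (S ^^ n) \<in> M \<rightarrow>\<^sub>M M"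
  by (induction n) (auto intro: measurable_compose)

lemma hit_enat_iff: "hit S A x = enat n \<longleftrightarrow> n \<ge> 1 \<and> (S ^^ n) x \<in> A \<and> (\<forall>i. 1 \<le> i \<and> i < n \<longrightarrow> (S ^^ i) x \<notin> A)"
proof
  assume h: "hit S A x = enat n"
  then have ex: "\<exists>n\<ge>1. (S ^^ n) x \<in> A" unfolding hit_def by (auto split: if_splits)
  with h have n: "n = (LEAST n. n \<ge> 1 \<and> (S ^^ n) x \<in> A)" unfolding hit_def by auto
  from ex have "n \<ge> 1 \<and> (S ^^ n) x \<in> A" unfolding n by (metis (mono_tags, lifting) LeastI)
  moreover have "\<forall>i. 1 \<le> i \<and> i < n \<longrightarrow> (S ^^ i) x \<notin> A"
    unfolding n using not_less_Least by blast
  ultimately show "n \<ge> 1 \<and> (S ^^ n) x \<in> A \<and> (\<forall>i. 1 \<le> i \<and> i < n \<longrightarrow> (S ^^ i) x \<notin> A)" by blast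
next
  assume h: "n \<ge> 1 \<and> (S ^^ n) x \<in> A \<and> (\<forall>i. 1 \<le> i \<and> i < n \<longrightarrow> (S ^^ i) x \<notin> A)"
  then have "(LEAST n. n \<ge> 1 \<and> (S ^^ n) x \<in> A) = n"
    by (intro Least_equality) (auto simp: not_less[symmetric])
  with h show "hit S A x = enat n" unfolding hit_def by auto
qed

lemma hit_inf_iff: "hit S A x = \<infinity> \<longleftrightarrow> (\<forall>n\<ge>1. (S ^^ n) x \<notin> A)"
  unfolding hit_def by auto

lemma hit_cases:
  obtains "hit S A x = \<infinity>" "\<forall>n\<ge>1. (S ^^ n) x \<notin> A"
  | n where "hit S A x = enat n" "n \<ge> 1" "(S ^^ n) x \<in> A" "\<forall>i. 1 \<le> i \<and> i < n \<longrightarrow> (S ^^ i) x \<notin> A"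
  by (cases "hit S A x") (auto simp: hit_enat_iff hit_inf_iff)

lemma hit_le_iff: "hit S A x \<le> enat j \<longleftrightarrow> (\<exists>i. 1 \<le> i \<and> i \<le> j \<and> (S ^^ i) x \<in> A)"
proof (cases rule: hit_cases[of S A x])
  case 1 then show ?thesis by auto
next
  case (2 n) then show ?thesis by (auto simp: not_less[symmetric])
qed

lemma hit_ge1: "hit S A x \<ge> 1"
  by (cases rule: hit_cases[of S A x]) (auto simp: one_enat_def)

lemma hit_shift:
  assumes "hit S A x > enat j"
  shows "hit S A x = hit S A ((S ^^ j) x) + enat j"
proof (cases rule: hit_cases[of S A x])
  case 1
  have e: "\<And>n. (S ^^ n) ((S ^^ j) x) = (S ^^ (n + j)) x" by (simp add: funpow_add)
  then have "\<forall>n\<ge>1. (S ^^ n) ((S ^^ j) x) \<notin> A" using 1 by auto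
  then have "hit S A ((S ^^ j) x) = \<infinity>" by (simp add: hit_inf_iff)
  then show ?thesis using 1 by simp
next
  case (2 n)
  with assms have jn: "j < n" by auto
  have "hit S A ((S ^^ j) x) = enat (n - j)"
    unfolding hit_enat_iff
  proof (intro conjI allI impI)
    show "(S ^^ (n - j)) ((S ^^ j) x) \<in> A" using 2 jn
      by (metis funpow_add[symmetric, unfolded comp_def] le_add_diff_inverse2 less_imp_le)
    fix i assume "1 \<le> i \<and> i < n - j"
    then have "(S ^^ (i + j)) x \<notin> A" using 2 by auto
    then show "(S ^^ i) ((S ^^ j) x) \<notin> A" by (simp add: funpow_add)
  qed (use jn in auto)
  then show ?thesis using 2 jn by simp
qed

lemma hit_meas[measurable]:
  assumes S: "S \<in> M \<rightarrow>\<^sub>M M" and A[measurable]: "A \<in> sets M"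
  shows "hit S A \<in> M \<rightarrow>\<^sub>M count_space UNIV"
proof -
  note Sn[measurable] = funpow_meas[OF S]
  show ?thesis
  unfolding measurable_count_space_eq2_countable
  proof (intro conjI ballI)
    fix v :: enat
    show "hit S A -` {v} \<inter> space M \<in> sets M"
    proof (cases v)
      case (enat n)
      have "hit S A -` {v} \<inter> space M = {x\<in>space M. n \<ge> 1 \<and> (S ^^ n) x \<in> A \<and> (\<forall>i. 1 \<le> i \<and> i < n \<longrightarrow> (S ^^ i) x \<notin> A)}"
        using enat by (auto simp: hit_enat_iff)
      also have "\<dots> \<in> sets M" by measurable
      finally show ?thesis .
    next
      case infinity
      have "hit S A -` {v} \<inter> space M = {x\<in>space M. \<forall>n. n \<ge> 1 \<longrightarrow> (S ^^ n) x \<notin> A}"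
        using infinity by (auto simp: hit_inf_iff)
      also have "\<dots> \<in> sets M" by measurable
      finally show ?thesis .
    qed
  qed auto
qed

lemma hit_set_meas:
  assumes S: "S \<in> M \<rightarrow>\<^sub>M M" and A: "A \<in> sets M"
  shows "{x\<in>space M. P (hit S A x)} \<in> sets M"
proof -
  have "hit S A -` {v. P v} \<inter> space M \<in> sets M"
    using measurable_sets[OF hit_meas[OF S A], of "{v. P v}"] by auto
  moreover have "hit S A -` {v. P v} \<inter> space M = {x\<in>space M. P (hit S A x)}" by auto
  ultimately show ?thesis by simp
qed

lemma return_map_meas:
  assumes S: "S \<in> M \<rightarrow>\<^sub>M M" and Y: "Y \<in> sets M"
  shows "return_map S Y \<in> M \<rightarrow>\<^sub>M M"
proof -
  have "(\<lambda>x. (\<lambda>i x. case i of enat n \<Rightarrow> (S ^^ n) x | \<infinity> \<Rightarrow> x) (hit S Y x) x) \<in> M \<rightarrow>\<^sub>M M"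
  proof (rule measurable_compose_countable[OF _ hit_meas[OF S Y]])
    fix i :: enat show "(\<lambda>x. case i of enat n \<Rightarrow> (S ^^ n) x | \<infinity> \<Rightarrow> x) \<in> M \<rightarrow>\<^sub>M M"
      by (cases i) (auto intro: funpow_meas[OF S])
  qed
  then show ?thesis unfolding return_map_def by simp
qed

lemma scale_meas:
  assumes S: "S \<in> M \<rightarrow>\<^sub>M M" and A: "A \<in> sets M"
  shows "(\<lambda>x. scale a (hit S A x)) \<in> borel_measurable M"
  by (rule measurable_compose_countable[OF _ hit_meas[OF S A]]) auto

lemma scale_set_meas:
  assumes S: "S \<in> M \<rightarrow>\<^sub>M M" and A: "A \<in> sets M"
  shows "{x\<in>space M. scale a (hit S A x) \<le> ereal t} \<in> sets M"
  using hit_set_meas[OF S A, of "\<lambda>h. scale a h \<le> ereal t"] .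

locale erg_sys = prob_space M for M :: "'a measure" +
  fixes T :: "'a \<Rightarrow> 'a"
  assumes Tm[measurable]: "T \<in> M \<rightarrow>\<^sub>M M" and Tinv: "distr M M T = M"
    and erg: "\<And>A. A \<in> sets M \<Longrightarrow> T -` A \<inter> space M = A \<Longrightarrow> prob A = 0 \<or> prob A = 1"
begin

lemma Tn_meas[measurable]: "(T ^^ n) \<in> M \<rightarrow>\<^sub>M M"
  by (rule funpow_meas[OF Tm])

lemma Tn_space: "x \<in> space M \<Longrightarrow> (T ^^ n) x \<in> space M"
  using measurable_space[OF Tn_meas] by blast

lemma Tn_inv: "distr M M (T ^^ n) = M"
proof (induction n)
  case 0 then show ?case by (simp add: distr_id2 id_def)
next
  case (Suc n)
  have "distr M M (T ^^ Suc n) = distr M M (T \<circ> (T ^^ n))" by simp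
  also have "\<dots> = distr (distr M M (T ^^ n)) M T"
    by (rule distr_distr[symmetric]) (auto intro: Tm Tn_meas)
  also have "\<dots> = M" using Suc Tinv by simp
  finally show ?case .
qed

lemma pres: "A \<in> sets M \<Longrightarrow> prob ((T ^^ n) -` A \<inter> space M) = prob A"
  by (metis Tn_inv Tn_meas measure_distr)

lemma pres1: "A \<in> sets M \<Longrightarrow> prob (T -` A \<inter> space M) = prob A"
  using pres[of A 1] by simp

lemma pres_int: "f \<in> borel_measurable M \<Longrightarrow> integral\<^sup>L M (\<lambda>x. f ((T ^^ n) x)) = integral\<^sup>L M (f :: 'a \<Rightarrow> real)"
  by (metis Tn_inv Tn_meas integral_distr)

lemma pres_int1: "f \<in> borel_measurable M \<Longrightarrow> integral\<^sup>L M (\<lambda>x. f (T x)) = integral\<^sup>L M (f :: 'a \<Rightarrow> real)"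
  using pres_int[of f 1] by simp

lemma recur:
  assumes A[measurable]: "A \<in> sets M" and pA: "prob A > 0"
  shows "AE x in M. \<forall>N. \<exists>n>N. (T ^^ n) x \<in> A"
proof -
  define U where "U m = {x\<in>space M. \<exists>n\<ge>m. (T ^^ n) x \<in> A}" for m
  have Um[measurable]: "U m \<in> sets M" for m unfolding U_def by measurable
  have sh: "(T ^^ Suc n) x = (T ^^ n) (T x)" for n x by (simp add: funpow_swap1)
  have U_Suc: "U (Suc m) = T -` U m \<inter> space M" for m
  proof (rule set_eqI)
    fix x
    show "x \<in> U (Suc m) \<longleftrightarrow> x \<in> T -` U m \<inter> space M"
    proof
      assume "x \<in> U (Suc m)"
      then obtain n where n: "n \<ge> Suc m" "(T ^^ n) x \<in> A" "x \<in> space M" unfolding U_def by auto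
      then obtain n' where n': "n = Suc n'" by (cases n) auto
      with n sh[of n' x] show "x \<in> T -` U m \<inter> space M" unfolding U_def
        using measurable_space[OF Tm] by auto
    next
      assume "x \<in> T -` U m \<inter> space M"
      then obtain n where n: "n \<ge> m" "(T ^^ n) (T x) \<in> A" "x \<in> space M" unfolding U_def by auto
      then show "x \<in> U (Suc m)" unfolding U_def using sh[of n x] by (auto intro!: exI[of _ "Suc n"])
    qed
  qed
  have pU: "prob (U m) = prob (U 0)" for m
    by (induction m) (auto simp: U_Suc pres1)
  have decU: "U m \<subseteq> U 0" for m unfolding U_def by auto
  define H where "H = (\<Inter>m. U m)"
  have H[measurable]: "H \<in> sets M" unfolding H_def by measurable
  have Hinv: "T -` H \<inter> space M = H"
  proof -
    have "T -` H \<inter> space M = (\<Inter>m. U (Suc m))" unfolding H_def U_Suc by auto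
    also have "\<dots> = H" unfolding H_def
    proof (intro set_eqI iffI)
      fix x assume x: "x \<in> (\<Inter>m. U (Suc m))"
      show "x \<in> (\<Inter>m. U m)"
      proof (intro InterI, clarsimp)
        fix m show "x \<in> U m" using x unfolding U_def by (cases m) force+
      qed
    qed auto
    finally show ?thesis .
  qed
  have "decseq U" unfolding decseq_def U_def by auto (meson order_trans)
  then have "(\<lambda>m. prob (U m)) \<longlonglongrightarrow> prob H" unfolding H_def
    by (intro finite_Lim_measure_decseq) auto
  moreover have "(\<lambda>m. prob (U m)) = (\<lambda>m. prob (U 0))" by (rule ext) (rule pU)
  ultimately have "(\<lambda>m. prob (U 0)) \<longlonglongrightarrow> prob H" by simp
  then have "prob H = prob (U 0)" by (simp add: LIMSEQ_const_iff)
  moreover have "A \<subseteq> U 0" unfolding U_def using sets.sets_into_space[OF A] by (auto intro!: exI[of _ 0])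
  then have "prob (U 0) \<ge> prob A" by (intro finite_measure_mono) auto
  ultimately have "prob H = 1" using erg[OF H Hinv] pA by auto
  then have "AE x in M. x \<in> H" by (intro AE_prob_1) 
  then show ?thesis
  proof (rule AE_mp, intro AE_I2 impI allI)
    fix x N assume "x \<in> H"
    then have "x \<in> U (Suc N)" unfolding H_def by auto
    then show "\<exists>n>N. (T ^^ n) x \<in> A" unfolding U_def by (auto simp: Suc_le_eq)
  qed
qed

lemma hit_finite_ae:
  assumes "A \<in> sets M" "prob A > 0"
  shows "AE x in M. hit T A x \<noteq> \<infinity>"
  using recur[OF assms]
proof eventually_elim
  case (elim x)
  then obtain n where "n > 0" "(T ^^ n) x \<in> A" by blast
  then show ?case unfolding hit_inf_iff by (intro notI) (metis One_nat_def Suc_leI)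
qed

end




context erg_sys begin

definition bsum :: "('a \<Rightarrow> real) \<Rightarrow> nat \<Rightarrow> 'a \<Rightarrow> real" where
  "bsum g n x = (\<Sum>i<n. g ((T ^^ i) x))"

lemma bsum_0[simp]: "bsum g 0 x = 0" by (simp add: bsum_def)

lemma bsum_Suc: "bsum g (Suc n) x = g x + bsum g n (T x)"
  unfolding bsum_def by (subst sum.lessThan_Suc_shift) (simp add: funpow_swap1)

lemma bsum_meas[measurable]: assumes [measurable]: "g \<in> borel_measurable M" shows "bsum g n \<in> borel_measurable M"
  unfolding bsum_def by measurable

lemma bsum_bound: "(\<And>x. x \<in> space M \<Longrightarrow> \<bar>g x\<bar> \<le> C) \<Longrightarrow> x \<in> space M \<Longrightarrow> \<bar>bsum g n x\<bar> \<le> n * C"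
proof -
  assume b: "\<And>x. x \<in> space M \<Longrightarrow> \<bar>g x\<bar> \<le> C" and x: "x \<in> space M"
  have "\<bar>bsum g n x\<bar> \<le> (\<Sum>i<n. \<bar>g ((T ^^ i) x)\<bar>)" unfolding bsum_def by (rule sum_abs)
  also have "\<dots> \<le> (\<Sum>i<n. C)" by (intro sum_mono b Tn_space x)
  finally show ?thesis by simp
qed

primrec mx :: "('a \<Rightarrow> real) \<Rightarrow> nat \<Rightarrow> 'a \<Rightarrow> real" where
  "mx g 0 x = 0"
| "mx g (Suc N) x = max (mx g N x) (bsum g (Suc N) x)"

lemma mx_meas[measurable]: assumes [measurable]: "g \<in> borel_measurable M" shows "mx g N \<in> borel_measurable M"
proof (induction N)
  case 0 then show ?case by simp
next
  case (Suc N)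
  note [measurable] = Suc
  have "mx g (Suc N) = (\<lambda>x. max (mx g N x) (bsum g (Suc N) x))" by (rule ext) simp
  also have "\<dots> \<in> borel_measurable M" by measurable
  finally show ?case .
qed

lemma mx_nonneg: "mx g N x \<ge> 0"
  by (induction N) auto

lemma mx_ge: "n \<le> N \<Longrightarrow> bsum g n x \<le> mx g N x"
proof (induction N)
  case 0 then show ?case by simp
next
  case (Suc N) then show ?case by (cases "n = Suc N") auto
qed

lemma mx_attained: "mx g N x = 0 \<or> (\<exists>n. 1 \<le> n \<and> n \<le> N \<and> mx g N x = bsum g n x)"
proof (induction N)
  case 0 then show ?case by simp
next
  case (Suc N) then show ?case
    by (auto simp: max_def)
qed

lemma mx_key: assumes "mx g N x > 0" shows "mx g N x \<le> g x + mx g N (T x)"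
proof -
  from mx_attained[of g N x] assms obtain n where n: "1 \<le> n" "n \<le> N" "mx g N x = bsum g n x" by auto
  then obtain n' where n': "n = Suc n'" by (cases n) auto
  have "bsum g n' (T x) \<le> mx g N (T x)" using n n' by (intro mx_ge) auto
  then show ?thesis using n n' by (simp add: bsum_Suc)
qed

lemma mx_bound: assumes "\<And>x. x \<in> space M \<Longrightarrow> \<bar>g x\<bar> \<le> C" "x \<in> space M" shows "\<bar>mx g N x\<bar> \<le> N * C"
proof (induction N)
  case 0 then show ?case by simp
next
  case (Suc N)
  have C: "C \<ge> 0" using assms by (metis abs_ge_zero order_trans)
  have "\<bar>bsum g (Suc N) x\<bar> \<le> Suc N * C" by (rule bsum_bound[OF assms])
  moreover have "N * C \<le> Suc N * C" using C by (simp add: mult_right_mono)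
  ultimately show ?case using Suc mx_nonneg[of g N x] mx_nonneg[of g "Suc N" x] by (auto simp: max_def)
qed

lemma maximal:
  assumes g[measurable]: "g \<in> borel_measurable M"
    and C: "\<And>x. x \<in> space M \<Longrightarrow> \<bar>g x\<bar> \<le> C"
    and full: "prob {x\<in>space M. \<exists>n. bsum g n x > 0} = 1"
  shows "integral\<^sup>L M g \<ge> 0"
proof -
  obtain x0 where x0: "x0 \<in> space M" using not_empty by blast
  have C0: "C \<ge> 0" using C[OF x0] by linarith
  define P where "P N = {x\<in>space M. mx g N x > 0}" for N
  have P[measurable]: "P N \<in> sets M" for N unfolding P_def by measurable
  have intg: "integrable M g" using C by (intro integrable_const_bound[of _ C]) auto
  have intmx: "integrable M (mx g N)" for N using mx_bound[OF C]
    by (intro integrable_const_bound[of _ "N * C"]) auto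
  have intmxT: "integrable M (\<lambda>x. mx g N (T x))" for N using mx_bound[OF C] measurable_space[OF Tm]
    by (intro integrable_const_bound[of _ "N * C"]) auto
  have step: "integral\<^sup>L M (\<lambda>x. indicator (P N) x * g x) \<ge> 0" for N
  proof -
    have "0 = integral\<^sup>L M (mx g N) - integral\<^sup>L M (\<lambda>x. mx g N (T x))"
      using pres_int1[of "mx g N"] by simp
    also have "\<dots> = integral\<^sup>L M (\<lambda>x. mx g N x - mx g N (T x))"
      using intmx intmxT by simp
    also have "\<dots> \<le> integral\<^sup>L M (\<lambda>x. indicator (P N) x * g x)"
    proof (rule integral_mono)
      show "integrable M (\<lambda>x. mx g N x - mx g N (T x))" using intmx intmxT by simp
      show "integrable M (\<lambda>x. indicator (P N) x * g x)" using integrable_mult_indicator[OF P intg] by simp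
      fix x assume x: "x \<in> space M"
      show "mx g N x - mx g N (T x) \<le> indicator (P N) x * g x"
      proof (cases "mx g N x > 0")
        case True then show ?thesis using mx_key[OF True] x by (auto simp: P_def)
      next
        case False then show ?thesis using mx_nonneg[of g N x] mx_nonneg[of g N "T x"] by (auto simp: P_def)
      qed
    qed
    finally show ?thesis .
  qed
  have "incseq P"
  proof (rule incseq_SucI)
    fix N show "P N \<subseteq> P (Suc N)" unfolding P_def by auto
  qed
  then have lim: "(\<lambda>N. prob (P N)) \<longlonglongrightarrow> prob (\<Union>N. P N)" by (intro finite_Lim_measure_incseq) auto
  have "(\<Union>N. P N) = {x\<in>space M. \<exists>n. bsum g n x > 0}"
  proof (intro set_eqI iffI)
    fix x assume "x \<in> (\<Union>N. P N)"
    then obtain N where "x \<in> space M" "mx g N x > 0" unfolding P_def by auto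
    with mx_attained[of g N x] show "x \<in> {x\<in>space M. \<exists>n. bsum g n x > 0}" by auto
  next
    fix x assume "x \<in> {x\<in>space M. \<exists>n. bsum g n x > 0}"
    then obtain n where "x \<in> space M" "bsum g n x > 0" by auto
    moreover have "mx g n x > 0" using mx_ge[of n n g x] \<open>bsum g n x > 0\<close> by linarith
    ultimately show "x \<in> (\<Union>N. P N)" unfolding P_def by blast
  qed
  with lim full have lim1: "(\<lambda>N. prob (P N)) \<longlonglongrightarrow> 1" by simp
  have bound: "- C * (1 - prob (P N)) \<le> integral\<^sup>L M g" for N
  proof -
    have "integral\<^sup>L M g = integral\<^sup>L M (\<lambda>x. indicator (P N) x * g x + indicator (space M - P N) x * g x)"
      by (intro Bochner_Integration.integral_cong) (auto simp: indicator_def)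
    also have "\<dots> = integral\<^sup>L M (\<lambda>x. indicator (P N) x * g x) + integral\<^sup>L M (\<lambda>x. indicator (space M - P N) x * g x)"
    proof -
      have i1: "integrable M (\<lambda>x. indicator (P N) x * g x)" using integrable_mult_indicator[OF P intg] by simp
      have i2: "integrable M (\<lambda>x. indicator (space M - P N) x * g x)"
        using integrable_mult_indicator[OF _ intg, of "space M - P N"] by simp
      show ?thesis by (rule Bochner_Integration.integral_add[OF i1 i2])
    qed
    also have "integral\<^sup>L M (\<lambda>x. indicator (space M - P N) x * g x) \<ge> integral\<^sup>L M (\<lambda>x. - C * indicator (space M - P N) x)"
    proof (rule integral_mono)
      show "integrable M (\<lambda>x. indicator (space M - P N) x * g x)"
        using integrable_mult_indicator[OF _ intg, of "space M - P N"] by simp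
      show "integrable M (\<lambda>x. - C * indicator (space M - P N) x)"
        using integrable_mult_indicator[OF _ integrable_const[of "- C"], of "space M - P N"] by (simp add: mult.commute)
      fix x assume "x \<in> space M" then show "- C * indicator (space M - P N) x \<le> indicator (space M - P N) x * g x"
        using C[of x] by (auto simp: indicator_def abs_le_iff)
    qed
    moreover have "integral\<^sup>L M (\<lambda>x. - C * indicator (space M - P N) x) = - C * (1 - prob (P N))"
      by (simp add: prob_compl)
    ultimately show ?thesis using step[of N] by linarith
  qed
  have "(\<lambda>N. - C * (1 - prob (P N))) \<longlonglongrightarrow> - C * (1 - 1)"
    by (intro tendsto_intros lim1)
  then have "(\<lambda>N. - C * (1 - prob (P N))) \<longlonglongrightarrow> 0" by simp
  then show ?thesis using bound by (intro LIMSEQ_le_const2[of "\<lambda>N. - C * (1 - prob (P N))"]) auto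
qed

lemma eventually_ge_mult:
  fixes d a :: real assumes "d > 0" shows "\<exists>K. \<forall>n\<ge>K. a \<le> d * real n"
proof -
  obtain K :: nat where "a / d < K" using reals_Archimedean2 by blast
  have "a \<le> d * real n" if n: "n \<ge> K" for n
  proof -
    have "a / d < real n" using \<open>a / d < K\<close> n by (meson of_nat_le_iff order_less_le_trans)
    then have "a < real n * d" using pos_divide_less_eq[OF assms] by blast
    then show ?thesis by (simp add: mult.commute)
  qed
  then show ?thesis by blast
qed

lemma birk_L_null:
  assumes A[measurable]: "A \<in> sets M" and c: "c > prob A"
  shows "prob {x\<in>space M. \<exists>m. \<forall>N. \<exists>n\<ge>N. bsum (indicator A) n x > (c + 1 / Suc m) * n} = 0"
    (is "prob ?L = 0")
proof -
  let ?S = "bsum (indicator A)"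
  let ?f = "\<lambda>m::nat. c + 1 / Suc m"
  have Lm[measurable]: "?L \<in> sets M" by measurable
  have S_Suc: "?S n (T x) \<le> ?S (Suc n) x" "?S (Suc n) x \<le> ?S n (T x) + 1" for n x
    by (auto simp: bsum_Suc indicator_def)
  have c0: "c > 0" using c measure_nonneg[of M A] by linarith
  have inv: "T -` ?L \<inter> space M = ?L"
  proof (intro set_eqI iffI)
    fix x assume x: "x \<in> T -` ?L \<inter> space M"
    then obtain m where m: "\<forall>N. \<exists>n\<ge>N. ?S n (T x) > ?f m * n" by auto
    define d where "d = 1 / (2 * Suc m)"
    have e: "real (Suc (2 * m + 1)) = 2 * real (Suc m)" by simp
    have h2: "2 * (1 / (2 * y)) = 1 / (y::real)" for y by (cases "y = 0") (auto simp: field_simps)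
    have d: "d > 0" "?f (2 * m + 1) = c + d" "?f m = c + 2 * d" unfolding d_def e using h2[of "real (Suc m)"] by auto
    obtain K where K: "\<forall>n\<ge>K. c + d \<le> d * real n" using eventually_ge_mult[OF d(1)] by blast
    have "\<forall>N. \<exists>n\<ge>N. ?S n x > ?f (2 * m + 1) * n"
    proof
      fix N
      obtain n where n: "n \<ge> max N K" "?S n (T x) > ?f m * n" using m by blast
      have "?f m * n = (c + 2 * d) * n" using d(3) by simp
      then have s1: "?S (Suc n) x > (c + 2 * d) * n" using n S_Suc[of n x] by linarith
      have s2: "(c + 2 * d) * n - (c + d) * Suc n = d * n - (c + d)" by (simp add: algebra_simps)
      have s3: "c + d \<le> d * n" using K n by auto
      have s4: "?f (2 * m + 1) * Suc n = (c + d) * Suc n" using d(2) by simp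
      have "?S (Suc n) x > ?f (2 * m + 1) * Suc n" using s1 s2 s3 s4 by linarith
      then show "\<exists>n\<ge>N. ?S n x > ?f (2 * m + 1) * n" using n
        by (intro exI[of _ "Suc n"]) auto
    qed
    then show "x \<in> ?L" using x by blast
  next
    fix x assume x: "x \<in> ?L"
    then obtain m where m: "\<forall>N. \<exists>n\<ge>N. ?S n x > ?f m * n" and xs: "x \<in> space M" by auto
    define d where "d = 1 / (2 * Suc m)"
    have e: "real (Suc (2 * m + 1)) = 2 * real (Suc m)" by simp
    have h2: "2 * (1 / (2 * y)) = 1 / (y::real)" for y by (cases "y = 0") (auto simp: field_simps)
    have d: "d > 0" "?f (2 * m + 1) = c + d" "?f m = c + 2 * d" unfolding d_def e using h2[of "real (Suc m)"] by auto
    obtain K where K: "\<forall>n\<ge>K. 1 \<le> d * real n" using eventually_ge_mult[OF d(1)] by blast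
    have "\<forall>N. \<exists>n\<ge>N. ?S n (T x) > ?f (2 * m + 1) * n"
    proof
      fix N
      obtain n where n: "n \<ge> Suc (max N K)" "?S n x > ?f m * n" using m by blast
      then obtain n' where n': "n = Suc n'" by (cases n) auto
      have "?f m * n = (c + 2 * d) * Suc n'" using d(3) n' by simp
      then have "?S (Suc n') x > (c + 2 * d) * Suc n'" using n(2) n' by simp
      then have s1: "?S n' (T x) > (c + 2 * d) * Suc n' - 1" using S_Suc[of n' x] by linarith
      have s2: "(c + 2 * d) * Suc n' - 1 - (c + d) * n' = d * n' + c + 2 * d - 1" by (simp add: algebra_simps)
      have s3: "1 \<le> d * n'" using K n n' by auto
      have s4: "?f (2 * m + 1) * n' = (c + d) * n'" using d(2) by simp
      have "?S n' (T x) > ?f (2 * m + 1) * n'" using s1 s2 s3 s4 c0 d(1) by linarith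
      then show "\<exists>n\<ge>N. ?S n (T x) > ?f (2 * m + 1) * n" using n n'
        by (intro exI[of _ n']) auto
    qed
    then show "x \<in> T -` ?L \<inter> space M" using xs measurable_space[OF Tm, of x] by blast
  qed
  have "prob ?L \<noteq> 1"
  proof
    assume L1: "prob ?L = 1"
    define g where "g x = indicator A x - c" for x
    have g[measurable]: "g \<in> borel_measurable M" unfolding g_def by measurable
    have bg: "bsum g n x = ?S n x - c * n" for n x
      unfolding bsum_def g_def by (simp add: sum_subtractf)
    have Lsub: "?L \<subseteq> {x\<in>space M. \<exists>n. bsum g n x > 0}"
    proof safe
      fix x m assume "\<forall>N. \<exists>n\<ge>N. ?S n x > ?f m * n"
      then obtain n where "?S n x > ?f m * n" by blast
      moreover have "?f m * n \<ge> c * n" by (simp add: mult_right_mono)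
      ultimately show "\<exists>n. bsum g n x > 0" unfolding bg by (intro exI[of _ n]) linarith
    qed
    have Pm: "{x\<in>space M. \<exists>n. bsum g n x > 0} \<in> sets M" by measurable
    have "prob {x\<in>space M. \<exists>n. bsum g n x > 0} \<ge> 1"
      using L1 finite_measure_mono[OF Lsub Pm] by simp
    then have "prob {x\<in>space M. \<exists>n. bsum g n x > 0} = 1" using prob_le_1 by (intro antisym) auto
    moreover have gb: "\<bar>g x\<bar> \<le> 1 + c" if "x \<in> space M" for x using c0 by (auto simp: g_def indicator_def)
    ultimately have "integral\<^sup>L M g \<ge> 0" using maximal[OF g gb] by blast
    moreover have "integral\<^sup>L M g = prob A - c" unfolding g_def
    proof -
      have "integral\<^sup>L M (\<lambda>x. indicator A x - c) = integral\<^sup>L M (indicator A) - integral\<^sup>L M (\<lambda>x. c)"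
        by (rule Bochner_Integration.integral_diff) (auto intro!: integrable_real_indicator simp: emeasure_eq_measure)
      then show "integral\<^sup>L M (\<lambda>x. indicator A x - c) = prob A - c" by (simp add: prob_space)
    qed
    ultimately show False using c by simp
  qed
  then show ?thesis using erg[OF Lm inv] by auto
qed

lemma birk_upper:
  assumes A[measurable]: "A \<in> sets M" and c: "c > prob A"
  shows "AE x in M. \<exists>N. \<forall>n\<ge>N. bsum (indicator A) n x \<le> c * n"
proof -
  define c' where "c' = (prob A + c) / 2"
  have c': "c' > prob A" "c' < c" using c unfolding c'_def by auto
  obtain m :: nat where m: "1 / Suc m < c - c'" using c'(2)
    by (metis diff_gt_0_iff_gt nat_approx_posE)
  let ?L = "{x\<in>space M. \<exists>m. \<forall>N. \<exists>n\<ge>N. bsum (indicator A) n x > (c' + 1 / Suc m) * n}"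
  have Lm: "?L \<in> sets M" by measurable
  have "?L \<in> null_sets M" using birk_L_null[OF A c'(1)] Lm
    by (intro null_setsI) (auto simp: emeasure_eq_measure)
  then have "AE x in M. x \<notin> ?L" by (rule AE_not_in)
  then show ?thesis
  proof (rule AE_mp, intro AE_I2 impI)
    fix x assume x: "x \<in> space M" "x \<notin> ?L"
    then obtain N where N: "\<forall>n\<ge>N. bsum (indicator A) n x \<le> (c' + 1 / Suc m) * n"
      by (auto simp: not_less)
    have "(c' + 1 / Suc m) * n \<le> c * n" for n :: nat using m by (intro mult_right_mono) auto
    then show "\<exists>N. \<forall>n\<ge>N. bsum (indicator A) n x \<le> c * n" using N by (meson order_trans)
  qed
qed

lemma birkhoff_ind:
  assumes A[measurable]: "A \<in> sets M"
  shows "AE x in M. (\<lambda>n. bsum (indicator A) n x / n) \<longlonglongrightarrow> prob A"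
proof -
  let ?S = "bsum (indicator A)"
  have Ac[measurable]: "space M - A \<in> sets M" by auto
  have up: "AE x in M. \<forall>j. \<exists>N. \<forall>n\<ge>N. ?S n x \<le> (prob A + 1 / Suc j) * n"
    by (subst AE_all_countable, intro allI birk_upper) auto
  have lo: "AE x in M. \<forall>j. \<exists>N. \<forall>n\<ge>N. bsum (indicator (space M - A)) n x \<le> (prob (space M - A) + 1 / Suc j) * n"
    by (subst AE_all_countable, intro allI birk_upper) auto
  show ?thesis
    using up lo AE_space
  proof (eventually_elim)
    case (elim x)
    have comp: "bsum (indicator (space M - A)) n x = n - ?S n x" for n
    proof -
      have "\<And>i. indicator (space M - A) ((T ^^ i) x) = 1 - (indicator A ((T ^^ i) x) :: real)"
        using Tn_space[OF elim(3)] by (auto simp: indicator_def)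
      then show ?thesis by (simp add: bsum_def sum_subtractf)
    qed
    have pc: "prob (space M - A) = 1 - prob A" by (simp add: prob_compl)
    show ?case unfolding lim_sequentially
    proof (intro allI impI)
      fix r :: real assume r: "r > 0"
      obtain j :: nat where j: "1 / Suc j < r" using r by (metis nat_approx_posE)
      obtain N1 where N1: "\<forall>n\<ge>N1. ?S n x \<le> (prob A + 1 / Suc j) * n" using elim(1) by blast
      obtain N2 where N2: "\<forall>n\<ge>N2. n - ?S n x \<le> (1 - prob A + 1 / Suc j) * n"
        using elim(2) by (auto simp: comp pc)
      show "\<exists>no. \<forall>n\<ge>no. dist (?S n x / n) (prob A) < r"
      proof (intro exI[of _ "max 1 (max N1 N2)"] allI impI)
        fix n assume n: "max 1 (max N1 N2) \<le> n"
        then have n0: "real n > 0" by auto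
        have "?S n x \<le> (prob A + 1 / Suc j) * n" "n - ?S n x \<le> (1 - prob A + 1 / Suc j) * n"
          using N1 N2 n by auto
        then have "?S n x \<le> (prob A + 1 / Suc j) * n" "(prob A - 1 / Suc j) * n \<le> ?S n x"
          by (auto simp: algebra_simps)
        then have "?S n x / n \<le> prob A + 1 / Suc j" "?S n x / n \<ge> prob A - 1 / Suc j"
          using n0 by (simp_all add: pos_divide_le_eq pos_le_divide_eq)
        then show "dist (?S n x / n) (prob A) < r" using j by (auto simp: dist_real_def abs_if)
      qed
    qed
  qed
qed

end




lemma cont_point_between:
  fixes F :: "real \<Rightarrow> real" assumes "mono F" "a < b"
  shows "\<exists>s. a < s \<and> s < b \<and> isCont F s"
proof (rule ccontr)
  assume "\<not> ?thesis"
  then have "{a<..<b} \<subseteq> {x. \<not> isCont F x}" by auto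
  then have "countable {a<..<b}" using mono_ctble_discont[OF assms(1)] countable_subset by blast
  then show False using uncountable_open_interval assms(2) by blast
qed

lemma law_close_one:
  fixes F :: "real \<Rightarrow> real" and g h :: "nat \<Rightarrow> real \<Rightarrow> real"
  assumes F: "mono F"
    and close1: "\<And>\<delta> \<eta> K. \<delta> > 0 \<Longrightarrow> \<eta> > 0 \<Longrightarrow> eventually (\<lambda>k. \<forall>t. \<bar>t\<bar> \<le> K \<longrightarrow> g k t \<le> h k (t + \<delta>) + \<eta>) sequentially"
    and close2: "\<And>\<delta> \<eta> K. \<delta> > 0 \<Longrightarrow> \<eta> > 0 \<Longrightarrow> eventually (\<lambda>k. \<forall>t. \<bar>t\<bar> \<le> K \<longrightarrow> h k t \<le> g k (t + \<delta>) + \<eta>) sequentially"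
    and hc: "\<And>t. isCont F t \<Longrightarrow> (\<lambda>k. h k t) \<longlonglongrightarrow> F t"
    and t: "isCont F t"
  shows "(\<lambda>k. g k t) \<longlonglongrightarrow> F t"
proof (rule LIMSEQ_I)
  fix r :: real assume r: "r > 0"
  from t r obtain e where e: "e > 0" "\<And>s. s \<noteq> t \<Longrightarrow> \<bar>s - t\<bar> < e \<Longrightarrow> \<bar>F s - F t\<bar> < r / 4"
    unfolding isCont_def LIM_eq by (metis divide_pos_pos real_norm_def zero_less_numeral)
  obtain s1 where s1: "t < s1" "s1 < t + e" "isCont F s1" using cont_point_between[OF F, of t "t + e"] e by auto
  obtain s2 where s2: "t - e < s2" "s2 < t" "isCont F s2" using cont_point_between[OF F, of "t - e" t] e by auto
  have "\<bar>F s1 - F t\<bar> < r / 4" using e(2)[of s1] s1 by auto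
  then have Fs1: "F s1 < F t + r / 4" using abs_less_iff[of "F s1 - F t" "r / 4"] by linarith
  have "\<bar>F s2 - F t\<bar> < r / 4" using e(2)[of s2] s2 by auto
  then have Fs2: "F s2 > F t - r / 4" using abs_less_iff[of "F s2 - F t" "r / 4"] by linarith
  have r4: "r / 4 > 0" using r by simp
  have ev1: "eventually (\<lambda>k. \<forall>u. \<bar>u\<bar> \<le> \<bar>t\<bar> + e \<longrightarrow> g k u \<le> h k (u + (s1 - t)) + r / 4) sequentially"
    using close1[of "s1 - t" "r / 4"] s1 r4 by auto
  have ev2: "eventually (\<lambda>k. \<forall>u. \<bar>u\<bar> \<le> \<bar>t\<bar> + e \<longrightarrow> h k u \<le> g k (u + (t - s2)) + r / 4) sequentially"
    using close2[of "t - s2" "r / 4"] s2 r4 by auto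
  have ev3: "eventually (\<lambda>k. dist (h k s1) (F s1) < r / 4) sequentially"
    using tendstoD[OF hc[OF s1(3)] r4] .
  have ev4: "eventually (\<lambda>k. dist (h k s2) (F s2) < r / 4) sequentially"
    using tendstoD[OF hc[OF s2(3)] r4] .
  have "eventually (\<lambda>k. norm (g k t - F t) < r) sequentially"
    using ev1 ev2 ev3 ev4
  proof eventually_elim
    case (elim k)
    have "g k t \<le> h k s1 + r / 4" using elim(1)[rule_format, of t] e by auto
    moreover have "h k s2 \<le> g k t + r / 4" using elim(2)[rule_format, of s2] s2 by auto
    ultimately show ?case using elim(3,4) Fs1 Fs2 by (auto simp: dist_real_def abs_if split: if_splits)
  qed
  then show "\<exists>no. \<forall>n\<ge>no. norm (g n t - F t) < r" by (simp add: eventually_sequentially)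
qed

lemma law_close_iff:
  fixes F :: "real \<Rightarrow> real" and g h :: "nat \<Rightarrow> real \<Rightarrow> real"
  assumes F: "mono F"
    and close1: "\<And>\<delta> \<eta> K. \<delta> > 0 \<Longrightarrow> \<eta> > 0 \<Longrightarrow> eventually (\<lambda>k. \<forall>t. \<bar>t\<bar> \<le> K \<longrightarrow> g k t \<le> h k (t + \<delta>) + \<eta>) sequentially"
    and close2: "\<And>\<delta> \<eta> K. \<delta> > 0 \<Longrightarrow> \<eta> > 0 \<Longrightarrow> eventually (\<lambda>k. \<forall>t. \<bar>t\<bar> \<le> K \<longrightarrow> h k t \<le> g k (t + \<delta>) + \<eta>) sequentially"
  shows "(\<forall>t. isCont F t \<longrightarrow> (\<lambda>k. g k t) \<longlonglongrightarrow> F t) \<longleftrightarrow> (\<forall>t. isCont F t \<longrightarrow> (\<lambda>k. h k t) \<longlonglongrightarrow> F t)"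
  using law_close_one[OF F close1 close2] law_close_one[OF F close2 close1] by blast

lemma conv_in_law_close:
  assumes F: "mono (dist_fun N R)"
    and close1: "\<And>\<delta> \<eta> K. \<delta> > 0 \<Longrightarrow> \<eta> > 0 \<Longrightarrow> eventually (\<lambda>k. \<forall>t. \<bar>t\<bar> \<le> K \<longrightarrow>
        measure P {x\<in>space P. f k x \<le> ereal t} \<le> measure Q {x\<in>space Q. f' k x \<le> ereal (t + \<delta>)} + \<eta>) sequentially"
    and close2: "\<And>\<delta> \<eta> K. \<delta> > 0 \<Longrightarrow> \<eta> > 0 \<Longrightarrow> eventually (\<lambda>k. \<forall>t. \<bar>t\<bar> \<le> K \<longrightarrow>
        measure Q {x\<in>space Q. f' k x \<le> ereal t} \<le> measure P {x\<in>space P. f k x \<le> ereal (t + \<delta>)} + \<eta>) sequentially"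
  shows "conv_in_law P f N R \<longleftrightarrow> conv_in_law Q f' N R"
  unfolding conv_in_law_def
  by (rule law_close_iff[OF F, of "\<lambda>k t. measure P {x\<in>space P. f k x \<le> ereal t}" "\<lambda>k t. measure Q {x\<in>space Q. f' k x \<le> ereal t}"])
     (use close1 close2 in auto)

lemma dist_fun_mono:
  assumes "prob_space N" and [measurable]: "R \<in> borel_measurable N"
  shows "mono (dist_fun N R)"
proof (rule monoI)
  fix s t :: real assume "s \<le> t"
  interpret prob_space N by fact
  have "{\<omega>\<in>space N. R \<omega> \<le> ereal t} \<in> sets N" by measurable
  moreover have "{\<omega>\<in>space N. R \<omega> \<le> ereal s} \<subseteq> {\<omega>\<in>space N. R \<omega> \<le> ereal t}"
    using \<open>s \<le> t\<close> by (auto intro: order_trans)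
  ultimately show "dist_fun N R s \<le> dist_fun N R t" unfolding dist_fun_def by (rule finite_measure_mono[rotated])
qed

primrec cnt :: "('a \<Rightarrow> 'a) \<Rightarrow> 'a set \<Rightarrow> 'a \<Rightarrow> nat \<Rightarrow> nat" where
  "cnt S Y x 0 = 0"
| "cnt S Y x (Suc n) = cnt S Y x n + (if (S ^^ Suc n) x \<in> Y then 1 else 0)"

lemma cnt_mono: "p \<le> q \<Longrightarrow> cnt S Y x p \<le> cnt S Y x q"
proof (induction q)
  case 0 then show ?case by simp
next
  case (Suc q) then show ?case by (cases "p = Suc q") (auto simp: le_Suc_eq)
qed

lemma cnt_strict: assumes "p < q" "(S ^^ q) x \<in> Y" shows "cnt S Y x p < cnt S Y x q"
proof -
  obtain q' where q': "q = Suc q'" using assms(1) by (cases q) auto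
  have "cnt S Y x p \<le> cnt S Y x q'" using assms(1) q' by (intro cnt_mono) auto
  then show ?thesis using q' assms(2) by simp
qed

lemma cnt_const: "(\<And>i. r < i \<Longrightarrow> i \<le> r + l \<Longrightarrow> (S ^^ i) x \<notin> Y) \<Longrightarrow> cnt S Y x (r + l) = cnt S Y x r"
proof (induction l)
  case 0 then show ?case by simp
next
  case (Suc l)
  have ih: "cnt S Y x (r + l) = cnt S Y x r" using Suc.prems by (intro Suc.IH) auto
  have "(S ^^ Suc (r + l)) x \<notin> Y" using Suc.prems[of "Suc (r + l)"] by simp
  then have "cnt S Y x (Suc (r + l)) = cnt S Y x (r + l)" by (simp only: cnt.simps) simp
  then show ?case using ih by simp
qed

lemma funpow_add_app: "(S ^^ (a + b)) x = (S ^^ a) ((S ^^ b) x)"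
  by (simp add: funpow_add)

lemma returns:
  assumes inf: "\<forall>N. \<exists>n>N. (S ^^ n) x \<in> Y"
  shows "\<exists>r. (return_map S Y ^^ j) x = (S ^^ r) x \<and> cnt S Y x r = j \<and> (j \<ge> 1 \<longrightarrow> (S ^^ r) x \<in> Y)"
proof (induction j)
  case 0 then show ?case by (intro exI[of _ 0]) auto
next
  case (Suc j)
  then obtain r where r: "(return_map S Y ^^ j) x = (S ^^ r) x" "cnt S Y x r = j" by blast
  define y where "y = (S ^^ r) x"
  from inf obtain n where n: "n > r" "(S ^^ n) x \<in> Y" by blast
  have ny: "(S ^^ (n - r)) y \<in> Y" using n unfolding y_def funpow_add_app[symmetric] by simp
  have nr: "n - r \<ge> 1" using n by auto
  have "hit S Y y \<noteq> \<infinity>" unfolding hit_inf_iff using nr ny by blast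
  then obtain d where d: "hit S Y y = enat d" "d \<ge> 1" "(S ^^ d) y \<in> Y" "\<forall>i. 1 \<le> i \<and> i < d \<longrightarrow> (S ^^ i) y \<notin> Y"
    by (cases rule: hit_cases[of S Y y]) auto
  have rm: "return_map S Y y = (S ^^ (d + r)) x" using d(1) unfolding return_map_def y_def funpow_add_app by simp
  have f1: "(return_map S Y ^^ Suc j) x = (S ^^ (d + r)) x" using r(1) rm y_def by simp
  have cc: "cnt S Y x (r + (d - 1)) = cnt S Y x r"
  proof (rule cnt_const)
    fix i assume i: "r < i" "i \<le> r + (d - 1)"
    then have "1 \<le> i - r \<and> i - r < d" using d(2) by auto
    then have "(S ^^ (i - r)) y \<notin> Y" using d(4) by blast
    then show "(S ^^ i) x \<notin> Y" using i unfolding y_def funpow_add_app[symmetric] by simp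
  qed
  have dr: "d + r = Suc (r + (d - 1))" using d(2) by simp
  have f3: "(S ^^ (d + r)) x \<in> Y" using d(3) unfolding y_def funpow_add_app by simp
  have f3': "(S ^^ Suc (r + (d - 1))) x \<in> Y" using f3 dr by metis
  have e1: "cnt S Y x (Suc (r + (d - 1))) = cnt S Y x (r + (d - 1)) + 1"
    using f3' by (simp only: cnt.simps(2) if_True)
  have e2: "cnt S Y x (d + r) = cnt S Y x (Suc (r + (d - 1)))" using dr by (rule arg_cong)
  have f2: "cnt S Y x (d + r) = Suc j" using e1 e2 cc r(2) by simp
  show ?case using f1 f2 f3 by blast
qed

lemma ind_hit_count:
  assumes inf: "\<forall>N. \<exists>n>N. (S ^^ n) x \<in> Y" and sub: "E \<subseteq> Y" and h: "hit S E x = enat m"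
  shows "hit (return_map S Y) E x = enat (cnt S Y x m)"
proof -
  from h have m: "m \<ge> 1" "(S ^^ m) x \<in> E" "\<forall>i. 1 \<le> i \<and> i < m \<longrightarrow> (S ^^ i) x \<notin> E"
    by (auto simp: hit_enat_iff)
  define J where "J = cnt S Y x m"
  have J1: "J \<ge> 1" unfolding J_def using cnt_strict[of 0 m S x Y] m sub by auto
  obtain rJ where rJ: "(return_map S Y ^^ J) x = (S ^^ rJ) x" "cnt S Y x rJ = J" "(S ^^ rJ) x \<in> Y"
    using returns[OF inf, of J] J1 by blast
  have "rJ = m"
  proof (rule ccontr)
    assume "rJ \<noteq> m"
    then have "rJ < m \<or> m < rJ" by auto
    then show False using cnt_strict[of rJ m S x Y] cnt_strict[of m rJ S x Y] rJ m sub unfolding J_def by auto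
  qed
  show ?thesis unfolding hit_enat_iff J_def[symmetric]
  proof (intro conjI allI impI)
    show "1 \<le> J" by fact
    show "(return_map S Y ^^ J) x \<in> E" using rJ \<open>rJ = m\<close> m by simp
    fix j assume j: "1 \<le> j \<and> j < J"
    obtain rj where rj: "(return_map S Y ^^ j) x = (S ^^ rj) x" "cnt S Y x rj = j"
      using returns[OF inf, of j] by blast
    have "rj \<noteq> 0" using rj(2) j by (cases rj) auto
    moreover have "rj < m"
    proof (rule ccontr)
      assume "\<not> rj < m"
      then have "cnt S Y x m \<le> cnt S Y x rj" by (intro cnt_mono) auto
      then show False using rj(2) j unfolding J_def by auto
    qed
    ultimately show "(return_map S Y ^^ j) x \<notin> E" using m(3) rj(1) by auto
  qed
qed

context erg_sys begin

lemma cnt_bsum: "real (cnt T Y x n) = bsum (indicator Y) n (T x)"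
proof (induction n)
  case 0 then show ?case by simp
next
  case (Suc n)
  have e1: "bsum (indicator Y) (Suc n) (T x) = bsum (indicator Y) n (T x) + indicator Y ((T ^^ Suc n) x)"
    unfolding bsum_def by (simp add: funpow_swap1)
  have e2: "real (cnt T Y x (Suc n)) = real (cnt T Y x n) + indicator Y ((T ^^ Suc n) x)"
    by (simp only: cnt.simps) (simp add: indicator_def)
  show ?case using e1 e2 Suc by linarith
qed

lemma hit_le_prob:
  assumes E[measurable]: "E \<in> sets M"
  shows "prob {x\<in>space M. hit T E x \<le> enat j} \<le> j * prob E"
proof -
  have "{x\<in>space M. hit T E x \<le> enat j} = (\<Union>i\<in>{1..j}. (T ^^ i) -` E \<inter> space M)"
    unfolding hit_le_iff by force
  also have "prob \<dots> \<le> (\<Sum>i\<in>{1..j}. prob ((T ^^ i) -` E \<inter> space M))"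
    by (rule finite_measure_subadditive_finite) auto
  also have "\<dots> = j * prob E" by (simp add: pres)
  finally show ?thesis .
qed

lemma hit_set_measT: "A \<in> sets M \<Longrightarrow> {x\<in>space M. P (hit T A x)} \<in> sets M"
  by (rule hit_set_meas[OF Tm])

end




lemma prob_sub:
  assumes "prob_space P" "A \<in> sets P" "B \<in> sets P"
  shows "measure P (A \<union> B) \<le> measure P A + measure P B"
proof -
  interpret prob_space P by fact
  show ?thesis using assms(2,3) by (intro measure_subadditive) (auto simp: emeasure_eq_measure)
qed

lemma scale_enat[simp]: "scale q (enat m) = ereal (q * real m)"
  by (simp add: scale_def)

lemma scale_inf: "q \<ge> 0 \<Longrightarrow> scale q \<infinity> = (if q = 0 then 0 else \<infinity>)"
  by (simp add: scale_def)

lemma scale_shift: assumes "q \<ge> 0" shows "scale q (h + enat j) = scale q h + ereal (q * real j)"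
proof (cases h)
  case (enat m) then show ?thesis by (simp add: algebra_simps)
next
  case infinity then show ?thesis using assms by (simp add: scale_inf)
qed

lemma scale_mono: assumes "q \<ge> 0" "h1 \<le> h2" shows "scale q h1 \<le> scale q h2"
proof (cases h2)
  case (enat m2)
  then obtain m1 where "h1 = enat m1" "m1 \<le> m2" using assms(2) by (cases h1) auto
  then show ?thesis using enat assms(1) by (simp add: mult_left_mono)
next
  case infinity
  then show ?thesis using assms(1)
    by (cases h1) (auto simp: scale_inf)
qed

lemma scale_nonneg: "q \<ge> 0 \<Longrightarrow> scale q h \<ge> 0"
  by (cases h) (auto simp: scale_inf)

lemma sd_close1:
  assumes "\<bar>scaled_diff q a b\<bar> < ereal \<delta>" "scale q a \<le> ereal t"
  shows "scale q b \<le> ereal (t + \<delta>)"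
proof -
  obtain m n where mn: "a = enat m" "b = enat n" using assms(1)
    by (cases a; cases b) (auto simp: scaled_diff_def)
  then have "\<bar>q * (real m - real n)\<bar> < \<delta>" "q * real m \<le> t" using assms by (auto simp: scaled_diff_def)
  then have "q * real n \<le> t + \<delta>" by (auto simp: algebra_simps abs_less_iff)
  then show ?thesis using mn by simp
qed

lemma sd_close2:
  assumes "\<bar>scaled_diff q a b\<bar> < ereal \<delta>" "scale q b \<le> ereal t"
  shows "scale q a \<le> ereal (t + \<delta>)"
proof -
  obtain m n where mn: "a = enat m" "b = enat n" using assms(1)
    by (cases a; cases b) (auto simp: scaled_diff_def)
  then have "\<bar>q * (real m - real n)\<bar> < \<delta>" "q * real n \<le> t" using assms by (auto simp: scaled_diff_def)
  then have "q * real m \<le> t + \<delta>" by (auto simp: algebra_simps abs_less_iff)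
  then show ?thesis using mn by simp
qed

lemma hit2_set_meas:
  assumes S: "S \<in> M \<rightarrow>\<^sub>M M" and A: "A \<in> sets M" and B: "B \<in> sets M"
  shows "{x\<in>space M. P (hit S A x) (hit S B x)} \<in> sets M"
proof -
  have "(\<lambda>x. P (hit S A x) (hit S B x)) \<in> M \<rightarrow>\<^sub>M count_space UNIV"
  proof (rule measurable_compose_countable[OF _ hit_meas[OF S A]])
    fix i show "(\<lambda>x. P i (hit S B x)) \<in> M \<rightarrow>\<^sub>M count_space UNIV"
      by (rule measurable_compose[OF hit_meas[OF S B]]) simp
  qed
  from measurable_sets[OF this, of "{True}"]
  show ?thesis by (simp add: vimage_def Int_def conj_commute)
qed

context erg_sys begin

lemma tower_le:
  assumes A[measurable]: "A \<in> sets M" and B[measurable]: "B \<in> sets M" and BA: "B \<subseteq> A" and pA: "prob A > 0"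
  shows "prob B \<le> prob {x\<in>space M. x \<in> A \<and> (\<exists>m. hit T A x = enat m \<and> (T ^^ m) x \<in> B)}"
proof -
  define D where "D m = {x\<in>space M. x \<in> A \<and> hit T A x = enat m \<and> (T ^^ m) x \<in> B}" for m
  define Dall where "Dall = {x\<in>space M. x \<in> A \<and> (\<exists>m. hit T A x = enat m \<and> (T ^^ m) x \<in> B)}"
  define W where "W n = {x\<in>space M. \<forall>i<n. (T ^^ i) x \<notin> A}" for n
  have Dm[measurable]: "D m \<in> sets M" for m
  proof -
    have "D m = {x\<in>space M. hit T A x = enat m} \<inter> A \<inter> ((T ^^ m) -` B \<inter> space M)"
      unfolding D_def by auto
    then show ?thesis using hit_set_measT[OF A, of "\<lambda>h. h = enat m"] by auto
  qed
  have Dallm[measurable]: "Dall \<in> sets M"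
  proof -
    have "Dall = (\<Union>m. D m)" unfolding Dall_def D_def by auto
    then show ?thesis by auto
  qed
  have Wm[measurable]: "W n \<in> sets M" for n unfolding W_def by measurable
  have step: "prob B \<le> prob (W n) + prob Dall" for n
  proof -
    have cover: "(T ^^ n) -` B \<inter> space M \<subseteq> W n \<union> (\<Union>i<n. (T ^^ i) -` D (n - i) \<inter> space M)"
    proof
      fix x assume x: "x \<in> (T ^^ n) -` B \<inter> space M"
      show "x \<in> W n \<union> (\<Union>i<n. (T ^^ i) -` D (n - i) \<inter> space M)"
      proof (cases "x \<in> W n")
        case True then show ?thesis by blast
      next
        case False
        define I where "I = {i. i < n \<and> (T ^^ i) x \<in> A}"
        have finI: "finite I" unfolding I_def by auto
        have neI: "I \<noteq> {}" using False x unfolding I_def W_def by auto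
        define i0 where "i0 = Max I"
        have i0I: "i0 \<in> I" unfolding i0_def using finI neI by (rule Max_in)
        have i0max: "\<And>i. i \<in> I \<Longrightarrow> i \<le> i0" unfolding i0_def using finI by auto
        define y where "y = (T ^^ i0) x"
        have i0n: "i0 < n" using i0I unfolding I_def by auto
        have yA: "y \<in> A" using i0I unfolding I_def y_def by auto
        have ys: "y \<in> space M" unfolding y_def using x Tn_space by auto
        have yB: "(T ^^ (n - i0)) y \<in> B" using x i0n unfolding y_def funpow_add_app[symmetric] by simp
        have "hit T A y = enat (n - i0)" unfolding hit_enat_iff
        proof (intro conjI allI impI)
          show "1 \<le> n - i0" using i0n by simp
          show "(T ^^ (n - i0)) y \<in> A" using yB BA by auto
          fix l assume l: "1 \<le> l \<and> l < n - i0"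
          have "l + i0 \<notin> I" using i0max[of "l + i0"] l by auto
          then have "(T ^^ (l + i0)) x \<notin> A" using l unfolding I_def by auto
          then show "(T ^^ l) y \<notin> A" unfolding y_def funpow_add_app by simp
        qed
        then have "y \<in> D (n - i0)" unfolding D_def using yA ys yB by auto
        then show ?thesis using i0n x unfolding y_def by auto
      qed
    qed
    have "prob B = prob ((T ^^ n) -` B \<inter> space M)" by (simp add: pres)
    also have "\<dots> \<le> prob (W n \<union> (\<Union>i<n. (T ^^ i) -` D (n - i) \<inter> space M))"
      by (rule finite_measure_mono[OF cover]) auto
    also have "\<dots> \<le> prob (W n) + prob (\<Union>i<n. (T ^^ i) -` D (n - i) \<inter> space M)"
      by (rule prob_sub) (auto simp: prob_space_axioms)
    also have "prob (\<Union>i<n. (T ^^ i) -` D (n - i) \<inter> space M) \<le> (\<Sum>i<n. prob ((T ^^ i) -` D (n - i) \<inter> space M))"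
      by (rule finite_measure_subadditive_finite) auto
    also have "\<dots> = (\<Sum>i<n. prob (D (n - i)))" by (simp add: pres)
    also have "\<dots> = prob (\<Union>i<n. D (n - i))"
    proof (rule finite_measure_finite_Union[symmetric])
      show "disjoint_family_on (\<lambda>i. D (n - i)) {..<n}"
        unfolding disjoint_family_on_def D_def by auto
    qed auto
    also have "\<dots> \<le> prob Dall"
      by (rule finite_measure_mono) (auto simp: D_def Dall_def)
    finally show ?thesis by simp
  qed
  have "decseq W" unfolding decseq_def W_def by auto
  then have limW: "(\<lambda>n. prob (W n)) \<longlonglongrightarrow> prob (\<Inter>n. W n)"
    by (intro finite_Lim_measure_decseq) auto
  have "AE x in M. x \<notin> (\<Inter>n. W n)"
    using hit_finite_ae[OF A pA]
  proof eventually_elim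
    case (elim x)
    then obtain m where "hit T A x = enat m" by auto
    then have "(T ^^ m) x \<in> A" by (auto simp: hit_enat_iff)
    then show ?case unfolding W_def by auto
  qed
  then have "(\<Inter>n. W n) \<in> null_sets M" using AE_iff_null_sets[of "\<Inter>n. W n" M] by auto
  then have "prob (\<Inter>n. W n) = 0" by (auto simp: measure_def)
  with limW have "(\<lambda>n. prob (W n)) \<longlonglongrightarrow> 0" by simp
  moreover have "\<forall>n. prob B - prob Dall \<le> prob (W n)" using step by (auto simp: algebra_simps)
  ultimately have "prob B - prob Dall \<le> 0" by (intro LIMSEQ_le_const[of "\<lambda>n. prob (W n)"]) auto
  then show ?thesis unfolding Dall_def by simp
qed

definition Bset :: "real \<Rightarrow> 'a set \<Rightarrow> real \<Rightarrow> 'a set" where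
  "Bset q A s = {x\<in>space M. scale q (hit T A x) \<le> ereal s}"

lemma Bset_meas[measurable]: "A \<in> sets M \<Longrightarrow> Bset q A s \<in> sets M"
  unfolding Bset_def by (rule scale_set_meas[OF Tm])

lemma Bset_mono: "s \<le> s' \<Longrightarrow> Bset q A s \<subseteq> Bset q A s'"
  unfolding Bset_def by (auto intro: order_trans)

lemma hit_gt_shift: assumes "\<not> hit T A x \<le> enat j" shows "hit T A x = hit T A ((T ^^ j) x) + enat j"
  using assms by (intro hit_shift) (simp add: not_le)

lemma incl1:
  assumes q: "q \<ge> 0" and jn: "j \<le> n"
  shows "(T ^^ j) -` (Y \<inter> Bset q A t) \<inter> space M \<subseteq> ((T ^^ j) -` Y \<inter> space M \<inter> Bset q A (t + q * n)) \<union> {x\<in>space M. hit T A x \<le> enat j}"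
proof
  fix x assume x: "x \<in> (T ^^ j) -` (Y \<inter> Bset q A t) \<inter> space M"
  show "x \<in> ((T ^^ j) -` Y \<inter> space M \<inter> Bset q A (t + q * n)) \<union> {x\<in>space M. hit T A x \<le> enat j}"
  proof (cases "hit T A x \<le> enat j")
    case False
    have sh: "hit T A x = hit T A ((T ^^ j) x) + enat j" by (rule hit_gt_shift[OF False])
    have f1: "scale q (hit T A ((T ^^ j) x)) \<le> ereal t" using x unfolding Bset_def by auto
    have "scale q (hit T A x) = scale q (hit T A ((T ^^ j) x)) + ereal (q * real j)"
      unfolding sh by (rule scale_shift[OF q])
    also have "\<dots> \<le> ereal t + ereal (q * real j)" using f1 by (intro add_right_mono)
    also have "\<dots> \<le> ereal (t + q * n)" using q jn by (simp add: mult_left_mono)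
    finally show ?thesis using x unfolding Bset_def by auto
  qed (use x in auto)
qed

lemma incl2:
  assumes q: "q \<ge> 0"
  shows "(T ^^ j) -` Y \<inter> space M \<inter> Bset q A t \<subseteq> ((T ^^ j) -` (Y \<inter> Bset q A t) \<inter> space M) \<union> {x\<in>space M. hit T A x \<le> enat j}"
proof
  fix x assume x: "x \<in> (T ^^ j) -` Y \<inter> space M \<inter> Bset q A t"
  show "x \<in> ((T ^^ j) -` (Y \<inter> Bset q A t) \<inter> space M) \<union> {x\<in>space M. hit T A x \<le> enat j}"
  proof (cases "hit T A x \<le> enat j")
    case False
    have sh: "hit T A x = hit T A ((T ^^ j) x) + enat j" by (rule hit_gt_shift[OF False])
    have "hit T A ((T ^^ j) x) \<le> hit T A x" unfolding sh by simp
    then have "scale q (hit T A ((T ^^ j) x)) \<le> scale q (hit T A x)" by (rule scale_mono[OF q])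
    also have "\<dots> \<le> ereal t" using x unfolding Bset_def by auto
    finally show ?thesis using x Tn_space unfolding Bset_def by auto
  qed (use x in auto)
qed

end




context erg_sys begin

lemma bsum_ind_bounds: "0 \<le> bsum (indicator Y) n x" "bsum (indicator Y) n x \<le> n"
proof -
  show "0 \<le> bsum (indicator Y) n x" unfolding bsum_def by (intro sum_nonneg) auto
  have "bsum (indicator Y) n x \<le> of_nat (card {..<n}) * 1" unfolding bsum_def
    by (intro sum_bounded_above) (auto simp: indicator_def)
  then show "bsum (indicator Y) n x \<le> n" by simp
qed

lemma avg_bound:
  assumes Y[measurable]: "Y \<in> sets M" and B[measurable]: "B \<in> sets M"
  shows "\<bar>(\<Sum>j<n. prob ((T ^^ j) -` Y \<inter> space M \<inter> B)) - n * prob Y * prob B\<bar>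
    \<le> integral\<^sup>L M (\<lambda>x. \<bar>bsum (indicator Y) n x - n * prob Y\<bar>)"
proof -
  have intf: "integrable M (\<lambda>x. indicator B x * indicator Y ((T ^^ j) x) :: real)" for j
    by (intro integrable_const_bound[of _ 1]) (auto simp: indicator_def)
  have i1: "prob ((T ^^ j) -` Y \<inter> space M \<inter> B) = integral\<^sup>L M (\<lambda>x. indicator B x * indicator Y ((T ^^ j) x))" for j
  proof -
    have "prob ((T ^^ j) -` Y \<inter> space M \<inter> B) = integral\<^sup>L M (indicator ((T ^^ j) -` Y \<inter> space M \<inter> B))"
      by (simp add: Int_absorb2 Int_assoc[symmetric] Int_commute)
    also have "\<dots> = integral\<^sup>L M (\<lambda>x. indicator B x * indicator Y ((T ^^ j) x))"
      by (intro Bochner_Integration.integral_cong) (auto simp: indicator_def)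
    finally show ?thesis .
  qed
  have s1: "(\<Sum>j<n. prob ((T ^^ j) -` Y \<inter> space M \<inter> B)) = integral\<^sup>L M (\<lambda>x. indicator B x * bsum (indicator Y) n x)"
  proof -
    have "(\<Sum>j<n. prob ((T ^^ j) -` Y \<inter> space M \<inter> B)) = (\<Sum>j<n. integral\<^sup>L M (\<lambda>x. indicator B x * indicator Y ((T ^^ j) x)))"
      using i1 by simp
    also have "\<dots> = integral\<^sup>L M (\<lambda>x. \<Sum>j<n. indicator B x * indicator Y ((T ^^ j) x))"
      by (rule Bochner_Integration.integral_sum[symmetric]) (rule intf)
    also have "\<dots> = integral\<^sup>L M (\<lambda>x. indicator B x * bsum (indicator Y) n x)"
      unfolding bsum_def by (simp add: sum_distrib_left)
    finally show ?thesis .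
  qed
  have intb: "integrable M (\<lambda>x. indicator B x * bsum (indicator Y) n x)"
    using bsum_ind_bounds by (intro integrable_const_bound[of _ n]) (auto simp: indicator_def)
  have intc: "integrable M (\<lambda>x. indicator B x * (n * prob Y))"
    by (intro integrable_const_bound[of _ "n * prob Y"]) (auto simp: indicator_def)
  have s2: "n * prob Y * prob B = integral\<^sup>L M (\<lambda>x. indicator B x * (n * prob Y))"
    by (simp add: Int_absorb2 mult.commute)
  have "(\<Sum>j<n. prob ((T ^^ j) -` Y \<inter> space M \<inter> B)) - n * prob Y * prob B
      = integral\<^sup>L M (\<lambda>x. indicator B x * bsum (indicator Y) n x - indicator B x * (n * prob Y))"
    unfolding s1 s2 by (rule Bochner_Integration.integral_diff[OF intb intc, symmetric])
  also have "\<dots> = integral\<^sup>L M (\<lambda>x. indicator B x * (bsum (indicator Y) n x - n * prob Y))"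
    by (simp add: algebra_simps)
  finally have eq: "(\<Sum>j<n. prob ((T ^^ j) -` Y \<inter> space M \<inter> B)) - n * prob Y * prob B
      = integral\<^sup>L M (\<lambda>x. indicator B x * (bsum (indicator Y) n x - n * prob Y))" .
  have "\<bar>integral\<^sup>L M (\<lambda>x. indicator B x * (bsum (indicator Y) n x - n * prob Y))\<bar>
      \<le> integral\<^sup>L M (\<lambda>x. \<bar>indicator B x * (bsum (indicator Y) n x - n * prob Y)\<bar>)"
    by (rule integral_abs_bound)
  also have "\<dots> \<le> integral\<^sup>L M (\<lambda>x. \<bar>bsum (indicator Y) n x - n * prob Y\<bar>)"
  proof (rule integral_mono)
    have bd: "\<bar>bsum (indicator Y) n x - n * prob Y\<bar> \<le> n + n * prob Y" for x
    proof -
      have "0 \<le> real n * prob Y" by simp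
      then show ?thesis using bsum_ind_bounds[of Y n x] unfolding abs_le_iff by (intro conjI; linarith)
    qed
    show "integrable M (\<lambda>x. \<bar>indicator B x * (bsum (indicator Y) n x - n * prob Y)\<bar>)"
      using bd by (intro integrable_const_bound[of _ "n + n * prob Y"]) (auto simp: indicator_def)
    show "integrable M (\<lambda>x. \<bar>bsum (indicator Y) n x - n * prob Y\<bar>)"
      using bd by (intro integrable_const_bound[of _ "n + n * prob Y"]) auto
  qed (auto simp: indicator_def abs_mult)
  finally show ?thesis unfolding eq .
qed

lemma e_lim:
  assumes Y[measurable]: "Y \<in> sets M"
  shows "(\<lambda>n. integral\<^sup>L M (\<lambda>x. \<bar>bsum (indicator Y) n x - n * prob Y\<bar>) / n) \<longlonglongrightarrow> 0"
proof -
  define s where "s n x = \<bar>bsum (indicator Y) n x / n - prob Y\<bar>" for n x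
  have sm[measurable]: "s n \<in> borel_measurable M" for n unfolding s_def by measurable
  have lim: "AE x in M. (\<lambda>n. s n x) \<longlonglongrightarrow> 0"
    using birkhoff_ind[OF Y]
  proof eventually_elim
    case (elim x)
    then have "(\<lambda>n. bsum (indicator Y) n x / n - prob Y) \<longlonglongrightarrow> 0" by (rule LIM_zero)
    then show ?case unfolding s_def by (rule tendsto_rabs_zero)
  qed
  have bound: "AE x in M. norm (s n x) \<le> 1 + prob Y" for n
  proof (intro AE_I2)
    fix x
    have "bsum (indicator Y) n x / n \<le> 1" "0 \<le> bsum (indicator Y) n x / n"
      using bsum_ind_bounds[of Y n x] by (auto simp: divide_le_eq)
    moreover have "0 \<le> prob Y" by simp
    ultimately show "norm (s n x) \<le> 1 + prob Y" unfolding s_def real_norm_def abs_le_iff by (intro conjI; linarith)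
  qed
  have "(\<lambda>n. integral\<^sup>L M (s n)) \<longlonglongrightarrow> integral\<^sup>L M (\<lambda>x. 0)"
    by (rule integral_dominated_convergence[where w="\<lambda>x. 1 + prob Y", OF _ sm _ lim bound]) auto
  then have l0: "(\<lambda>n. integral\<^sup>L M (s n)) \<longlonglongrightarrow> 0" by simp
  have "eventually (\<lambda>n. integral\<^sup>L M (s n) = integral\<^sup>L M (\<lambda>x. \<bar>bsum (indicator Y) n x - n * prob Y\<bar>) / n) sequentially"
    using eventually_ge_at_top[of 1]
  proof eventually_elim
    case (elim n)
    have "s n x = \<bar>bsum (indicator Y) n x - n * prob Y\<bar> / n" for x
      unfolding s_def using elim by (simp add: field_simps abs_div_pos[symmetric])
    then have "s n = (\<lambda>x. \<bar>bsum (indicator Y) n x - n * prob Y\<bar> / n)" by (intro ext)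
    then show ?case by simp
  qed
  with l0 show ?thesis by (rule Lim_transform_eventually)
qed

lemma birk_T:
  assumes Y[measurable]: "Y \<in> sets M"
  shows "AE x in M. (\<lambda>n. bsum (indicator Y) n (T x) / n) \<longlonglongrightarrow> prob Y"
  using birkhoff_ind[OF Y]
proof eventually_elim
  case (elim x)
  let ?S = "\<lambda>n. bsum (indicator Y) n x"
  have "(\<lambda>n. ?S (Suc n) / real (Suc n)) \<longlonglongrightarrow> prob Y" using LIMSEQ_Suc[OF elim] by simp
  then have "(\<lambda>n. ?S (Suc n) / real (Suc n) * (real (Suc n) / real n) - indicator Y x / real n) \<longlonglongrightarrow> prob Y * 1 - 0"
    by (intro tendsto_intros LIMSEQ_Suc_n_over_n)
  moreover have "eventually (\<lambda>n. ?S (Suc n) / real (Suc n) * (real (Suc n) / real n) - indicator Y x / real n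
      = bsum (indicator Y) n (T x) / n) sequentially"
    using eventually_ge_at_top[of 1]
  proof eventually_elim
    case (elim n)
    have nz: "real n \<noteq> 0" "real (Suc n) \<noteq> 0" using elim by auto
    have ca: "a \<noteq> 0 \<Longrightarrow> S / a * (a / b) = S / b" for a b S :: real
      by (cases "b = 0") (auto simp: field_simps)
    have "?S (Suc n) / real (Suc n) * (real (Suc n) / real n) = ?S (Suc n) / real n"
      using nz by (intro ca)
    then show ?case by (simp add: bsum_Suc diff_divide_distrib[symmetric] add_divide_distrib)
  qed
  ultimately show ?case by (simp add: Lim_transform_eventually)
qed

lemma Z2_lim:
  assumes Y[measurable]: "Y \<in> sets M" and pY: "prob Y > 0" and rho: "\<rho> > 0"
  shows "(\<lambda>n0. prob {x\<in>space M. \<exists>n\<ge>n0. \<bar>bsum (indicator Y) n (T x) - prob Y * n\<bar> > prob Y * \<rho> * n}) \<longlonglongrightarrow> 0"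
proof -
  define Z where "Z n0 = {x\<in>space M. \<exists>n\<ge>n0. \<bar>bsum (indicator Y) n (T x) - prob Y * n\<bar> > prob Y * \<rho> * n}" for n0
  have Zm[measurable]: "Z n0 \<in> sets M" for n0 unfolding Z_def by measurable
  have "decseq Z" unfolding decseq_def Z_def by auto (meson order_trans)
  then have limZ: "(\<lambda>n. prob (Z n)) \<longlonglongrightarrow> prob (\<Inter>n. Z n)"
    by (intro finite_Lim_measure_decseq) auto
  have "AE x in M. x \<notin> (\<Inter>n. Z n)"
    using birk_T[OF Y]
  proof eventually_elim
    case (elim x)
    have r: "prob Y * \<rho> > 0" using pY rho by simp
    from elim have "eventually (\<lambda>n. dist (bsum (indicator Y) n (T x) / n) (prob Y) < prob Y * \<rho>) sequentially"
      using r tendstoD by blast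
    then obtain N where N: "\<And>n. n \<ge> N \<Longrightarrow> \<bar>bsum (indicator Y) n (T x) / n - prob Y\<bar> < prob Y * \<rho>"
      by (auto simp: eventually_sequentially dist_real_def)
    show ?case
    proof
      assume "x \<in> (\<Inter>n. Z n)"
      then have "x \<in> Z (Suc N)" by blast
      then obtain n where n: "n \<ge> Suc N" "\<bar>bsum (indicator Y) n (T x) - prob Y * n\<bar> > prob Y * \<rho> * n"
        unfolding Z_def by auto
      have npos: "real n > 0" using n by auto
      have "\<bar>bsum (indicator Y) n (T x) - prob Y * n\<bar> = \<bar>bsum (indicator Y) n (T x) / n - prob Y\<bar> * n"
        using npos by (simp add: field_simps abs_mult[symmetric] abs_of_pos)
      then have "\<bar>bsum (indicator Y) n (T x) / n - prob Y\<bar> * n > prob Y * \<rho> * n" using n by simp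
      then have "\<bar>bsum (indicator Y) n (T x) / n - prob Y\<bar> > prob Y * \<rho>" using npos
        by (simp add: mult_less_cancel_right)
      then show False using N[of n] n by auto
    qed
  qed
  then have "(\<Inter>n. Z n) \<in> null_sets M" using AE_iff_null_sets[of "\<Inter>n. Z n" M] by auto
  then have "prob (\<Inter>n. Z n) = 0" by (auto simp: measure_def)
  with limZ show ?thesis unfolding Z_def by simp
qed

end




lemma prob_mono_union3:
  assumes "prob_space P" "A \<subseteq> B \<union> C \<union> D" "B \<in> sets P" "C \<in> sets P" "D \<in> sets P"
  shows "measure P A \<le> measure P B + measure P C + measure P D"
proof -
  interpret prob_space P by fact
  have "measure P A \<le> measure P (B \<union> C \<union> D)" using assms by (intro finite_measure_mono) auto
  also have "\<dots> \<le> measure P (B \<union> C) + measure P D" using assms by (intro prob_sub) auto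
  also have "measure P (B \<union> C) \<le> measure P B + measure P C" using assms by (intro prob_sub) auto
  finally show ?thesis by simp
qed

locale ps = erg_sys +
  fixes E E' :: "nat \<Rightarrow> 'a set" and Y :: "'a set"
  assumes E_meas[measurable]: "\<And>k. E k \<in> sets M" and E_pos: "\<And>k. prob (E k) > 0"
    and E_lim: "(\<lambda>k. prob (E k)) \<longlonglongrightarrow> 0"
    and Y_meas[measurable]: "Y \<in> sets M" and Y_pos: "prob Y > 0"
    and E'_meas[measurable]: "\<And>k. E' k \<in> sets M" and E'_sub: "\<And>k. E' k \<subseteq> Y"
    and via: "\<And>k. reach_only_via M T Y (E k) (E' k)"
begin

abbreviation MY where "MY \<equiv> uniform_measure M Y"

lemma Y_em: "emeasure M Y \<noteq> 0" "emeasure M Y \<noteq> \<infinity>"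
  using Y_pos by (auto simp: emeasure_eq_measure)

lemma MY_prob: "prob_space MY" by (rule prob_space_uniform_measure[OF Y_em])

lemma MY_meas: "S \<in> sets M \<Longrightarrow> measure MY S = prob (Y \<inter> S) / prob Y"
  by (rule measure_uniform_measure[OF Y_em])

lemma MY_le: "S \<in> sets M \<Longrightarrow> measure MY S \<le> prob S / prob Y"
  using MY_meas[of S] Y_pos by (auto intro!: divide_right_mono finite_measure_mono)

definition dd :: "nat \<Rightarrow> 'a \<Rightarrow> ereal" where
  "dd k x = scaled_diff (prob (E' k)) (hit T (E k) x) (hit T (E' k) x)"

lemma bad_meas[measurable]: "{x\<in>space M. \<not> \<bar>dd k x\<bar> < ereal e} \<in> sets M"
  unfolding dd_def by (rule hit2_set_meas[OF Tm E_meas E'_meas])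

lemma via_ae: "AE x in M. \<forall>n. x \<in> Y \<longrightarrow> (T ^^ n) x \<in> E k \<longrightarrow> (\<exists>j\<le>n. (T ^^ j) x \<in> E' k)"
  unfolding AE_all_countable using via[of k] unfolding reach_only_via_def by blast

lemma E'_pos: "prob (E' k) > 0"
proof (rule ccontr)
  assume "\<not> prob (E' k) > 0"
  then have z: "prob (E' k) = 0" using measure_nonneg[of M "E' k"] by linarith
  have "(T ^^ j) -` E' k \<inter> space M \<in> null_sets M" for j
    using z by (intro null_setsI) (auto simp: emeasure_eq_measure pres)
  then have "(\<Union>j. (T ^^ j) -` E' k \<inter> space M) \<in> null_sets M" by (rule null_sets_UN)
  then have a1: "AE x in M. x \<notin> (\<Union>j. (T ^^ j) -` E' k \<inter> space M)" by (rule AE_not_in)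
  have a2: "AE x in M. \<forall>N. \<exists>n>N. (T ^^ n) x \<in> E k" by (rule recur[OF E_meas E_pos])
  have "AE x in M. x \<notin> Y" using a1 a2 via_ae[of k] AE_space
  proof eventually_elim
    case (elim x)
    show "x \<notin> Y"
    proof
      assume xY: "x \<in> Y"
      obtain n where "(T ^^ n) x \<in> E k" using elim(2) by blast
      then obtain j where "(T ^^ j) x \<in> E' k" using elim(3) xY by blast
      then show False using elim(1,4) by blast
    qed
  qed
  then have "Y \<in> null_sets M" using AE_iff_null_sets[OF Y_meas] by blast
  then have "prob Y = 0" by (auto simp: measure_def)
  then show False using Y_pos by simp
qed

lemma ae_fin: "AE x in M. (\<exists>a. hit T (E k) x = enat a) \<and> (\<exists>b. hit T (E' k) x = enat b)"
  using hit_finite_ae[OF E_meas E_pos, of k] hit_finite_ae[OF E'_meas E'_pos, of k]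
  by eventually_elim (auto simp: not_infinity_eq)

lemma pE'_le: assumes "E' k \<subseteq> (\<Union>m\<le>m0. (T ^^ m) -` (E k) \<inter> space M)"
  shows "prob (E' k) \<le> Suc m0 * prob (E k)"
proof -
  have "prob (E' k) \<le> prob (\<Union>m\<le>m0. (T ^^ m) -` (E k) \<inter> space M)" by (rule finite_measure_mono[OF assms]) auto
  also have "\<dots> \<le> (\<Sum>m\<le>m0. prob ((T ^^ m) -` (E k) \<inter> space M))" by (rule finite_measure_subadditive_finite) auto
  also have "\<dots> = Suc m0 * prob (E k)" by (simp add: pres)
  finally show ?thesis .
qed

lemma part_b:
  assumes m0: "\<forall>k. E' k \<subseteq> (\<Union>m\<le>m0. (T ^^ m) -` (E k) \<inter> space M)"
  shows "tendsto_zero_in_measure MY dd"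
  unfolding tendsto_zero_in_measure_def
proof (intro allI impI)
  fix \<epsilon> :: real assume e: "\<epsilon> > 0"
  have pE'0: "(\<lambda>k. prob (E' k)) \<longlonglongrightarrow> 0"
  proof (rule tendsto_sandwich[of "\<lambda>k. 0" _ _ "\<lambda>k. Suc m0 * prob (E k)"])
    show "eventually (\<lambda>k. 0 \<le> prob (E' k)) sequentially" by simp
    show "eventually (\<lambda>k. prob (E' k) \<le> Suc m0 * prob (E k)) sequentially" using pE'_le m0 by auto
    show "(\<lambda>k. 0) \<longlonglongrightarrow> (0::real)" by simp
    show "(\<lambda>k. Suc m0 * prob (E k)) \<longlonglongrightarrow> 0" using tendsto_mult[OF tendsto_const[of "real (Suc m0)"] E_lim] by simp
  qed
  have ae: "AE x in M. x \<in> Y \<longrightarrow> x \<notin> E' k \<longrightarrow> \<bar>dd k x\<bar> \<le> ereal (prob (E' k) * m0)" for k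
    using via_ae[of k] ae_fin[of k]
  proof eventually_elim
    case (elim x)
    show ?case
    proof (intro impI)
      assume xY: "x \<in> Y" and xE': "x \<notin> E' k"
      obtain a b where ab: "hit T (E k) x = enat a" "hit T (E' k) x = enat b" using elim(2) by blast
      from ab have a: "a \<ge> 1" "(T ^^ a) x \<in> E k" "\<forall>i. 1 \<le> i \<and> i < a \<longrightarrow> (T ^^ i) x \<notin> E k"
        and b: "b \<ge> 1" "(T ^^ b) x \<in> E' k" "\<forall>i. 1 \<le> i \<and> i < b \<longrightarrow> (T ^^ i) x \<notin> E' k"
        by (auto simp: hit_enat_iff)
      obtain j where j: "j \<le> a" "(T ^^ j) x \<in> E' k" using elim(1) xY a by blast
      have "j \<noteq> 0" using j xE' by (cases j) auto
      then have "b \<le> j" using b(3) j by (metis One_nat_def Suc_leI not_less neq0_conv)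
      then have ba: "b \<le> a" using j by simp
      have "(T ^^ b) x \<in> (\<Union>m\<le>m0. (T ^^ m) -` (E k) \<inter> space M)" using m0 b(2) by blast
      then obtain m where m: "m \<le> m0" "(T ^^ (m + b)) x \<in> E k" by (auto simp: funpow_add_app)
      have "\<not> m + b < a" using a(3) m b(1) by auto
      then have amb: "a \<le> m + b" by simp
      have p0: "prob (E' k) \<ge> 0" by simp
      have "\<bar>prob (E' k) * (real a - real b)\<bar> = prob (E' k) * (real a - real b)" using ba p0 by simp
      also have "\<dots> \<le> prob (E' k) * m0" using amb m(1) p0 by (intro mult_left_mono) auto
      finally show "\<bar>dd k x\<bar> \<le> ereal (prob (E' k) * m0)"
        unfolding dd_def ab scaled_diff_def by simp
    qed
  qed
  have evk: "eventually (\<lambda>k. prob (E' k) * m0 < \<epsilon>) sequentially"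
    using tendsto_mult[OF pE'0 tendsto_const[of "real m0"]] e by (auto dest: order_tendstoD(2))
  show "(\<lambda>k. measure MY {x\<in>space MY. \<not> \<bar>dd k x\<bar> < ereal \<epsilon>}) \<longlonglongrightarrow> 0"
  proof (rule tendsto_sandwich[of "\<lambda>k. 0" _ _ "\<lambda>k. prob (E' k) / prob Y"])
    show "eventually (\<lambda>k. 0 \<le> measure MY {x\<in>space MY. \<not> \<bar>dd k x\<bar> < ereal \<epsilon>}) sequentially" by simp
    show "eventually (\<lambda>k. measure MY {x\<in>space MY. \<not> \<bar>dd k x\<bar> < ereal \<epsilon>} \<le> prob (E' k) / prob Y) sequentially"
      using evk
    proof eventually_elim
      case (elim k)
      note pk = elim
      have "prob (Y \<inter> {x\<in>space M. \<not> \<bar>dd k x\<bar> < ereal \<epsilon>}) \<le> prob (E' k)"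
      proof (rule finite_measure_mono_AE)
        show "AE x in M. x \<in> Y \<inter> {x\<in>space M. \<not> \<bar>dd k x\<bar> < ereal \<epsilon>} \<longrightarrow> x \<in> E' k"
          using ae[of k]
        proof eventually_elim
          case (elim x)
          show ?case
          proof (intro impI)
            assume x: "x \<in> Y \<inter> {x\<in>space M. \<not> \<bar>dd k x\<bar> < ereal \<epsilon>}"
            show "x \<in> E' k"
            proof (rule ccontr)
              assume "x \<notin> E' k"
              then have "\<bar>dd k x\<bar> \<le> ereal (prob (E' k) * m0)" using elim x by auto
              also have "\<dots> < ereal \<epsilon>" using pk by simp
              finally show False using x by auto
            qed
          qed
        qed
      qed auto
      then have "prob (Y \<inter> {x\<in>space M. \<not> \<bar>dd k x\<bar> < ereal \<epsilon>}) / prob Y \<le> prob (E' k) / prob Y"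
        using Y_pos by (intro divide_right_mono) auto
      then show ?case by (simp add: MY_meas)
    qed
    show "(\<lambda>k. 0) \<longlonglongrightarrow> (0::real)" by simp
    show "(\<lambda>k. prob (E' k) / prob Y) \<longlonglongrightarrow> 0" using tendsto_divide[OF pE'0 tendsto_const[of "prob Y"]] Y_pos by simp
  qed
qed

lemma part_a1:
  assumes cond: "tendsto_zero_in_measure MY dd"
  shows "(\<lambda>k. prob (E' k)) \<longlonglongrightarrow> 0"
proof -
  have key: "prob (E' k) \<le> prob (E k) + prob (Y \<inter> {x\<in>space M. \<not> \<bar>dd k x\<bar> < ereal (prob (E' k))})" for k
  proof -
    have t: "prob (E' k - E k) \<le> prob {x\<in>space M. x \<in> E' k \<and> (\<exists>m. hit T (E' k) x = enat m \<and> (T ^^ m) x \<in> E' k - E k)}"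
      by (rule tower_le) (auto intro: E'_pos)
    have sub: "{x\<in>space M. x \<in> E' k \<and> (\<exists>m. hit T (E' k) x = enat m \<and> (T ^^ m) x \<in> E' k - E k)}
        \<subseteq> Y \<inter> {x\<in>space M. \<not> \<bar>dd k x\<bar> < ereal (prob (E' k))}"
    proof
      fix x assume "x \<in> {x\<in>space M. x \<in> E' k \<and> (\<exists>m. hit T (E' k) x = enat m \<and> (T ^^ m) x \<in> E' k - E k)}"
      then obtain m where x: "x \<in> space M" "x \<in> E' k" "hit T (E' k) x = enat m" "(T ^^ m) x \<notin> E k" by auto
      have "\<not> \<bar>dd k x\<bar> < ereal (prob (E' k))"
      proof
        assume lt: "\<bar>dd k x\<bar> < ereal (prob (E' k))"
        show False
        proof (cases "hit T (E k) x")
          case infinity then show False using lt x unfolding dd_def scaled_diff_def by simp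
        next
          case (enat a)
          have "(T ^^ a) x \<in> E k" using enat by (auto simp: hit_enat_iff)
          then have "a \<noteq> m" using x by auto
          then have am: "1 \<le> \<bar>real a - real m\<bar>" by (cases "a < m") auto
          have "prob (E' k) * 1 \<le> prob (E' k) * \<bar>real a - real m\<bar>"
            using am by (intro mult_left_mono) auto
          then have "prob (E' k) \<le> \<bar>prob (E' k) * (real a - real m)\<bar>" by (simp add: abs_mult)
          then show False using lt enat x unfolding dd_def scaled_diff_def by simp
        qed
      qed
      then show "x \<in> Y \<inter> {x\<in>space M. \<not> \<bar>dd k x\<bar> < ereal (prob (E' k))}" using x E'_sub by auto
    qed
    have "prob {x\<in>space M. x \<in> E' k \<and> (\<exists>m. hit T (E' k) x = enat m \<and> (T ^^ m) x \<in> E' k - E k)}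
        \<le> prob (Y \<inter> {x\<in>space M. \<not> \<bar>dd k x\<bar> < ereal (prob (E' k))})"
      by (rule finite_measure_mono[OF sub]) auto
    moreover have "prob (E' k) \<le> prob (E k \<union> (E' k - E k))" by (rule finite_measure_mono) auto
    moreover have "prob (E k \<union> (E' k - E k)) \<le> prob (E k) + prob (E' k - E k)"
      by (rule prob_sub) (auto simp: prob_space_axioms)
    ultimately show ?thesis using t by linarith
  qed
  show ?thesis
  proof (rule LIMSEQ_I)
    fix r :: real assume r: "r > 0"
    define e where "e = r / 2"
    have e: "e > 0" using r by (simp add: e_def)
    have m0: "(\<lambda>k. measure MY {x\<in>space MY. \<not> \<bar>dd k x\<bar> < ereal e}) \<longlonglongrightarrow> 0"
      using cond e unfolding tendsto_zero_in_measure_def by blast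
    have "(\<lambda>k. prob (E k) + prob Y * measure MY {x\<in>space MY. \<not> \<bar>dd k x\<bar> < ereal e}) \<longlonglongrightarrow> 0 + prob Y * 0"
      by (intro tendsto_intros E_lim m0)
    then have "eventually (\<lambda>k. prob (E k) + prob Y * measure MY {x\<in>space MY. \<not> \<bar>dd k x\<bar> < ereal e} < e) sequentially"
      using e by (auto dest: order_tendstoD(2))
    then have "eventually (\<lambda>k. norm (prob (E' k) - 0) < r) sequentially"
    proof eventually_elim
      case (elim k)
      show ?case
      proof (cases "prob (E' k) < e")
        case True then show ?thesis using e_def r by auto
      next
        case False
        have sub: "{x\<in>space M. \<not> \<bar>dd k x\<bar> < ereal (prob (E' k))} \<subseteq> {x\<in>space M. \<not> \<bar>dd k x\<bar> < ereal e}"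
        proof safe
          fix x assume "\<not> \<bar>dd k x\<bar> < ereal (prob (E' k))" "\<bar>dd k x\<bar> < ereal e"
          moreover have "ereal e \<le> ereal (prob (E' k))" using False by simp
          ultimately show False by (meson less_le_trans)
        qed
        have "prob (Y \<inter> {x\<in>space M. \<not> \<bar>dd k x\<bar> < ereal (prob (E' k))}) \<le> prob (Y \<inter> {x\<in>space M. \<not> \<bar>dd k x\<bar> < ereal e})"
          using sub by (intro finite_measure_mono) auto
        also have "prob (Y \<inter> {x\<in>space M. \<not> \<bar>dd k x\<bar> < ereal e}) = prob Y * measure MY {x\<in>space MY. \<not> \<bar>dd k x\<bar> < ereal e}"
          using MY_meas[of "{x\<in>space M. \<not> \<bar>dd k x\<bar> < ereal e}"] Y_pos by simp
        finally have "prob (E' k) < r" using key[of k] elim e_def r by linarith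
        then show ?thesis by simp
      qed
    qed
    then show "\<exists>no. \<forall>n\<ge>no. norm (prob (E' n) - 0) < r" by (simp add: eventually_sequentially)
  qed
qed

end




context ps begin

lemma Bset_eq: "{x\<in>space MY. scale q (hit T A x) \<le> ereal s} = Bset q A s"
  "{x\<in>space M. scale q (hit T A x) \<le> ereal s} = Bset q A s"
  by (simp_all add: Bset_def)

lemma MY_sub2:
  assumes "A \<subseteq> B \<union> C" "B \<in> sets M" "C \<in> sets M"
  shows "measure MY A \<le> measure MY B + measure MY C"
proof -
  interpret Q: prob_space MY by (rule MY_prob)
  have "measure MY A \<le> measure MY (B \<union> C)" using assms by (intro Q.finite_measure_mono) auto
  also have "\<dots> \<le> measure MY B + measure MY C" using assms by (intro prob_sub[OF MY_prob]) auto
  finally show ?thesis .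
qed

lemma close_i:
  assumes cond: "tendsto_zero_in_measure MY dd" and d: "\<delta> > 0" and h: "\<eta> > 0"
  shows "eventually (\<lambda>k. \<forall>t. \<bar>t\<bar> \<le> K \<longrightarrow>
      measure MY {x\<in>space MY. scale (prob (E' k)) (hit T (E k) x) \<le> ereal t}
        \<le> measure MY {x\<in>space MY. scale (prob (E' k)) (hit T (E' k) x) \<le> ereal (t + \<delta>)} + \<eta>) sequentially"
    and "eventually (\<lambda>k. \<forall>t. \<bar>t\<bar> \<le> K \<longrightarrow>
      measure MY {x\<in>space MY. scale (prob (E' k)) (hit T (E' k) x) \<le> ereal t}
        \<le> measure MY {x\<in>space MY. scale (prob (E' k)) (hit T (E k) x) \<le> ereal (t + \<delta>)} + \<eta>) sequentially"
proof -
  have ev: "eventually (\<lambda>k. measure MY {x\<in>space MY. \<not> \<bar>dd k x\<bar> < ereal \<delta>} < \<eta>) sequentially"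
    using cond d h unfolding tendsto_zero_in_measure_def by (auto dest: order_tendstoD(2))
  show "eventually (\<lambda>k. \<forall>t. \<bar>t\<bar> \<le> K \<longrightarrow>
      measure MY {x\<in>space MY. scale (prob (E' k)) (hit T (E k) x) \<le> ereal t}
        \<le> measure MY {x\<in>space MY. scale (prob (E' k)) (hit T (E' k) x) \<le> ereal (t + \<delta>)} + \<eta>) sequentially"
    using ev
  proof eventually_elim
    case (elim k)
    show ?case
    proof (intro allI impI)
      fix t
      have "measure MY (Bset (prob (E' k)) (E k) t) \<le> measure MY (Bset (prob (E' k)) (E' k) (t + \<delta>)) + measure MY {x\<in>space M. \<not> \<bar>dd k x\<bar> < ereal \<delta>}"
        by (rule MY_sub2) (auto simp: Bset_def dd_def dest: sd_close1)
      then show "measure MY {x\<in>space MY. scale (prob (E' k)) (hit T (E k) x) \<le> ereal t}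
        \<le> measure MY {x\<in>space MY. scale (prob (E' k)) (hit T (E' k) x) \<le> ereal (t + \<delta>)} + \<eta>"
        using elim unfolding Bset_eq by simp
    qed
  qed
  show "eventually (\<lambda>k. \<forall>t. \<bar>t\<bar> \<le> K \<longrightarrow>
      measure MY {x\<in>space MY. scale (prob (E' k)) (hit T (E' k) x) \<le> ereal t}
        \<le> measure MY {x\<in>space MY. scale (prob (E' k)) (hit T (E k) x) \<le> ereal (t + \<delta>)} + \<eta>) sequentially"
    using ev
  proof eventually_elim
    case (elim k)
    show ?case
    proof (intro allI impI)
      fix t
      have "measure MY (Bset (prob (E' k)) (E' k) t) \<le> measure MY (Bset (prob (E' k)) (E k) (t + \<delta>)) + measure MY {x\<in>space M. \<not> \<bar>dd k x\<bar> < ereal \<delta>}"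
        by (rule MY_sub2) (auto simp: Bset_def dd_def dest: sd_close2)
      then show "measure MY {x\<in>space MY. scale (prob (E' k)) (hit T (E' k) x) \<le> ereal t}
        \<le> measure MY {x\<in>space MY. scale (prob (E' k)) (hit T (E k) x) \<le> ereal (t + \<delta>)} + \<eta>"
        using elim unfolding Bset_eq by simp
    qed
  qed
qed

lemma key_ineqs:
  fixes n :: nat and q t :: real
  assumes q: "q \<ge> 0" and A[measurable]: "A \<in> sets M"
  defines "en \<equiv> integral\<^sup>L M (\<lambda>x. \<bar>bsum (indicator Y) n x - n * prob Y\<bar>)"
  shows "n * prob (Y \<inter> Bset q A t) \<le> n * prob Y * prob (Bset q A (t + q * n)) + en + n * (n * prob A)"
    and "n * prob Y * prob (Bset q A t) \<le> n * prob (Y \<inter> Bset q A t) + en + n * (n * prob A)"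
proof -
  have hj: "prob {x\<in>space M. hit T A x \<le> enat j} \<le> n * prob A" if "j < n" for j
  proof -
    have "prob {x\<in>space M. hit T A x \<le> enat j} \<le> j * prob A" by (rule hit_le_prob[OF A])
    also have "\<dots> \<le> n * prob A" using that by (intro mult_right_mono) auto
    finally show ?thesis .
  qed
  have hm[measurable]: "{x\<in>space M. hit T A x \<le> enat j} \<in> sets M" for j by (rule hit_set_measT[OF A])
  have ab: "\<bar>(\<Sum>j<n. prob ((T ^^ j) -` Y \<inter> space M \<inter> B)) - n * prob Y * prob B\<bar> \<le> en" if "B \<in> sets M" for B
    unfolding en_def by (rule avg_bound[OF Y_meas that])
  have s1: "prob (Y \<inter> Bset q A t) \<le> prob ((T ^^ j) -` Y \<inter> space M \<inter> Bset q A (t + q * n)) + n * prob A" if j: "j < n" for j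
  proof -
    have "prob (Y \<inter> Bset q A t) = prob ((T ^^ j) -` (Y \<inter> Bset q A t) \<inter> space M)"
      using Bset_meas[OF A] by (intro pres[symmetric]) auto
    also have "\<dots> \<le> prob (((T ^^ j) -` Y \<inter> space M \<inter> Bset q A (t + q * n)) \<union> {x\<in>space M. hit T A x \<le> enat j})"
      using incl1[OF q, of j n Y A t] j by (intro finite_measure_mono) auto
    also have "\<dots> \<le> prob ((T ^^ j) -` Y \<inter> space M \<inter> Bset q A (t + q * n)) + prob {x\<in>space M. hit T A x \<le> enat j}"
      by (rule prob_sub) (auto simp: prob_space_axioms)
    finally show ?thesis using hj[OF j] by linarith
  qed
  have "(\<Sum>j<n. prob (Y \<inter> Bset q A t)) \<le> (\<Sum>j<n. prob ((T ^^ j) -` Y \<inter> space M \<inter> Bset q A (t + q * n)) + n * prob A)"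
    by (intro sum_mono s1) auto
  then have "n * prob (Y \<inter> Bset q A t) \<le> (\<Sum>j<n. prob ((T ^^ j) -` Y \<inter> space M \<inter> Bset q A (t + q * n))) + n * (n * prob A)"
    by (simp add: sum.distrib)
  moreover have "(\<Sum>j<n. prob ((T ^^ j) -` Y \<inter> space M \<inter> Bset q A (t + q * n))) \<le> n * prob Y * prob (Bset q A (t + q * n)) + en"
    using ab[of "Bset q A (t + q * n)"] by (auto simp: abs_le_iff)
  ultimately show "n * prob (Y \<inter> Bset q A t) \<le> n * prob Y * prob (Bset q A (t + q * n)) + en + n * (n * prob A)"
    by linarith
  have s2: "prob ((T ^^ j) -` Y \<inter> space M \<inter> Bset q A t) \<le> prob (Y \<inter> Bset q A t) + n * prob A" if j: "j < n" for j
  proof -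
    have "prob ((T ^^ j) -` Y \<inter> space M \<inter> Bset q A t) \<le> prob (((T ^^ j) -` (Y \<inter> Bset q A t) \<inter> space M) \<union> {x\<in>space M. hit T A x \<le> enat j})"
      using incl2[OF q, of j Y A t] by (intro finite_measure_mono) auto
    also have "\<dots> \<le> prob ((T ^^ j) -` (Y \<inter> Bset q A t) \<inter> space M) + prob {x\<in>space M. hit T A x \<le> enat j}"
      by (rule prob_sub) (auto simp: prob_space_axioms)
    also have "prob ((T ^^ j) -` (Y \<inter> Bset q A t) \<inter> space M) = prob (Y \<inter> Bset q A t)"
      using Bset_meas[OF A] by (intro pres) auto
    finally show ?thesis using hj[OF j] by linarith
  qed
  have "(\<Sum>j<n. prob ((T ^^ j) -` Y \<inter> space M \<inter> Bset q A t)) \<le> (\<Sum>j<n. prob (Y \<inter> Bset q A t) + n * prob A)"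
    by (intro sum_mono s2) auto
  then have "(\<Sum>j<n. prob ((T ^^ j) -` Y \<inter> space M \<inter> Bset q A t)) \<le> n * prob (Y \<inter> Bset q A t) + n * (n * prob A)"
    by (simp add: sum.distrib distrib_left)
  moreover have "n * prob Y * prob (Bset q A t) \<le> (\<Sum>j<n. prob ((T ^^ j) -` Y \<inter> space M \<inter> Bset q A t)) + en"
    using ab[of "Bset q A t"] by (auto simp: abs_le_iff)
  ultimately show "n * prob Y * prob (Bset q A t) \<le> n * prob (Y \<inter> Bset q A t) + en + n * (n * prob A)"
    by linarith
qed

end




context ps begin

lemma close_ii:
  assumes p0: "(\<lambda>k. prob (E' k)) \<longlonglongrightarrow> 0" and d: "\<delta> > 0" and h: "\<eta> > 0"
  shows "eventually (\<lambda>k. \<forall>t. measure MY (Bset (prob (E' k)) (E k) t) \<le> prob (Bset (prob (E' k)) (E k) (t + \<delta>)) + \<eta>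
     \<and> prob (Bset (prob (E' k)) (E k) t) \<le> measure MY (Bset (prob (E' k)) (E k) (t + \<delta>)) + \<eta>) sequentially"
proof -
  define c where "c = prob Y"
  have c: "c > 0" using Y_pos c_def by simp
  define en where "en n = integral\<^sup>L M (\<lambda>x. \<bar>bsum (indicator Y) n x - n * prob Y\<bar>)" for n :: nat
  have en0: "(\<lambda>n. en n / n) \<longlonglongrightarrow> 0" unfolding en_def by (rule e_lim[OF Y_meas])
  have hc: "\<eta> * c / 2 > 0" using h c by simp
  obtain N where N: "\<And>n. n \<ge> N \<Longrightarrow> en n / n < \<eta> * c / 2"
    using order_tendstoD(2)[OF en0 hc] by (auto simp: eventually_sequentially)
  define n where "n = Suc N"
  have npos: "real n > 0" unfolding n_def by simp
  have "en n / n < \<eta> * c / 2" using N[of n] unfolding n_def by simp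
  then have "en n < \<eta> * c / 2 * n" using npos by (simp add: pos_divide_less_eq)
  then have en: "en n < n * c * \<eta> / 2" by (simp add: algebra_simps)
  have l1: "(\<lambda>k. prob (E' k) * n) \<longlonglongrightarrow> 0" using tendsto_mult[OF p0 tendsto_const[of "real n"]] by simp
  have ev1: "eventually (\<lambda>k. prob (E' k) * n < \<delta>) sequentially" using order_tendstoD(2)[OF l1 d] .
  have l2: "(\<lambda>k. n * prob (E k)) \<longlonglongrightarrow> 0" using tendsto_mult[OF tendsto_const[of "real n"] E_lim] by simp
  have ev2: "eventually (\<lambda>k. n * prob (E k) < \<eta> * c / 2) sequentially" using order_tendstoD(2)[OF l2 hc] .
  show ?thesis
    using ev1 ev2
  proof eventually_elim
    case (elim k)
    let ?q = "prob (E' k)"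
    let ?B = "Bset ?q (E k)"
    have q: "?q \<ge> 0" by simp
    have b: "n * (n * prob (E k)) < n * c * \<eta> / 2"
    proof -
      have "n * (n * prob (E k)) < n * (\<eta> * c / 2)" using elim(2) npos by (intro mult_strict_left_mono) auto
      then show ?thesis by (simp add: algebra_simps)
    qed
    have my: "measure MY (?B s) = prob (Y \<inter> ?B s) / c" for s
      unfolding c_def by (rule MY_meas) simp
    have Hc: "prob (Y \<inter> ?B s) = c * measure MY (?B s)" for s using my[of s] c by simp
    have ncpos: "real n * c > 0" using npos c by simp
    show ?case
    proof (intro allI conjI)
      fix t
      have K1: "n * prob (Y \<inter> ?B t) \<le> n * c * prob (?B (t + ?q * n)) + en n + n * (n * prob (E k))"
        using key_ineqs(1)[where n=n and t=t, OF q E_meas] unfolding en_def c_def by simp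
      have K2: "n * c * prob (?B t) \<le> n * prob (Y \<inter> ?B t) + en n + n * (n * prob (E k))"
        using key_ineqs(2)[where n=n and t=t, OF q E_meas] unfolding en_def c_def by simp
      have mono1: "prob (?B (t + ?q * n)) \<le> prob (?B (t + \<delta>))"
        using elim(1) by (intro finite_measure_mono Bset_mono) auto
      have "prob (Y \<inter> ?B t) \<le> prob (Y \<inter> ?B (t + \<delta>))"
        using d Bset_mono[where s=t and s'="t + \<delta>" and q="?q" and A="E k"] by (intro finite_measure_mono) auto
      then have mono2: "measure MY (?B t) \<le> measure MY (?B (t + \<delta>))" using Hc c by simp
      have X1: "n * c * measure MY (?B t) \<le> n * c * prob (?B (t + \<delta>)) + n * c * \<eta>"
      proof -
        have "n * c * prob (?B (t + ?q * n)) \<le> n * c * prob (?B (t + \<delta>))"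
          using mono1 ncpos by (intro mult_left_mono) auto
        moreover have "n * c * measure MY (?B t) = n * prob (Y \<inter> ?B t)" using Hc by simp
        ultimately show ?thesis using K1 en b by linarith
      qed
      have "n * c * measure MY (?B t) \<le> n * c * (prob (?B (t + \<delta>)) + \<eta>)" using X1 by (simp add: algebra_simps)
      then show "measure MY (?B t) \<le> prob (?B (t + \<delta>)) + \<eta>" using ncpos by (simp add: mult_le_cancel_left_pos)
      have X2: "n * c * prob (?B t) \<le> n * c * measure MY (?B t) + n * c * \<eta>"
      proof -
        have "n * c * measure MY (?B t) = n * prob (Y \<inter> ?B t)" using Hc by simp
        then show ?thesis using K2 en b by linarith
      qed
      have "n * c * prob (?B t) \<le> n * c * (measure MY (?B t) + \<eta>)" using X2 by (simp add: algebra_simps)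
      then have "prob (?B t) \<le> measure MY (?B t) + \<eta>" using ncpos by (simp add: mult_le_cancel_left_pos)
      then show "prob (?B t) \<le> measure MY (?B (t + \<delta>)) + \<eta>" using mono2 by linarith
    qed
  qed
qed

lemma ind_set_meas: "{x\<in>space M. scale q (ind_hit T Y (E' k) x) \<le> ereal s} \<in> sets M"
  unfolding ind_hit_def by (rule scale_set_meas[OF return_map_meas[OF Tm Y_meas] E'_meas])

lemma close_iii:
  assumes p0: "(\<lambda>k. prob (E' k)) \<longlonglongrightarrow> 0" and d: "\<delta> > 0" and h: "\<eta> > 0"
  shows "eventually (\<lambda>k. \<forall>t. \<bar>t\<bar> \<le> K \<longrightarrow>
      measure MY {x\<in>space M. scale (prob (E' k) / prob Y) (ind_hit T Y (E' k) x) \<le> ereal t}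
        \<le> measure MY (Bset (prob (E' k)) (E' k) (t + \<delta>)) + \<eta>
    \<and> measure MY (Bset (prob (E' k)) (E' k) t)
        \<le> measure MY {x\<in>space M. scale (prob (E' k) / prob Y) (ind_hit T Y (E' k) x) \<le> ereal (t + \<delta>)} + \<eta>) sequentially"
proof -
  define c where "c = prob Y"
  have c: "c > 0" using Y_pos c_def by simp
  define \<rho> where "\<rho> = min (1/2) (\<delta> / (2 * (\<bar>K\<bar> + 1)))"
  have K1: "2 * (\<bar>K\<bar> + 1) > 0" by simp
  have rho3: "\<rho> * (2 * (\<bar>K\<bar> + 1)) \<le> \<delta>"
  proof -
    have "\<rho> \<le> \<delta> / (2 * (\<bar>K\<bar> + 1))" by (simp add: \<rho>_def)
    then have "\<rho> * (2 * (\<bar>K\<bar> + 1)) \<le> \<delta> / (2 * (\<bar>K\<bar> + 1)) * (2 * (\<bar>K\<bar> + 1))"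
      using K1 by (intro mult_right_mono) auto
    also have "\<dots> = \<delta>" using K1 by simp
    finally show ?thesis .
  qed
  have rho1: "\<rho> > 0" using d K1 by (simp add: \<rho>_def)
  have rho2: "\<rho> \<le> 1/2" unfolding \<rho>_def by (rule min.cobounded1)
  note rho = rho1 rho2 rho3
  define Z where "Z n0 = {x\<in>space M. \<exists>n\<ge>n0. \<bar>bsum (indicator Y) n (T x) - prob Y * n\<bar> > prob Y * \<rho> * n}" for n0
  have Zm[measurable]: "Z n0 \<in> sets M" for n0 unfolding Z_def by measurable
  have Zl: "(\<lambda>n0. prob (Z n0)) \<longlonglongrightarrow> 0" unfolding Z_def by (rule Z2_lim[OF Y_meas Y_pos rho(1)])
  have hc: "\<eta> * c / 2 > 0" using h c by simp
  obtain n0 where n0: "prob (Z n0) < \<eta> * c / 2"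
    using order_tendstoD(2)[OF Zl hc] by (auto simp: eventually_sequentially)
  have l2: "(\<lambda>k. n0 * prob (E' k)) \<longlonglongrightarrow> 0" using tendsto_mult[OF tendsto_const[of "real n0"] p0] by simp
  have ev: "eventually (\<lambda>k. n0 * prob (E' k) < \<eta> * c / 2) sequentially" using order_tendstoD(2)[OF l2 hc] .
  have aeY: "AE x in M. \<forall>N. \<exists>n>N. (T ^^ n) x \<in> Y" by (rule recur[OF Y_meas Y_pos])
  show ?thesis
    using ev
  proof eventually_elim
    case (elim k)
    let ?q = "prob (E' k)"
    let ?G = "\<lambda>s. {x\<in>space M. scale (?q / prob Y) (ind_hit T Y (E' k) x) \<le> ereal s}"
    let ?F = "\<lambda>s. Bset ?q (E' k) s"
    let ?H = "{x\<in>space M. hit T (E' k) x \<le> enat n0}"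
    have Hm: "?H \<in> sets M" by (rule hit_set_measT[OF E'_meas])
    have Gm: "?G s \<in> sets M" for s by (rule ind_set_meas)
    have q: "?q \<ge> 0" by simp
    have pt: "AE x in M. x \<in> Y \<longrightarrow> x \<notin> Z n0 \<longrightarrow> x \<notin> ?H \<longrightarrow> \<bar>t\<bar> \<le> K \<longrightarrow>
        (x \<in> ?G t \<longrightarrow> x \<in> ?F (t + \<delta>)) \<and> (x \<in> ?F t \<longrightarrow> x \<in> ?G (t + \<delta>))" for t
      using aeY ae_fin[of k] AE_space
    proof eventually_elim
      case (elim x)
      show ?case
      proof (intro impI)
        assume xY: "x \<in> Y" and xZ: "x \<notin> Z n0" and xH: "x \<notin> ?H" and tK: "\<bar>t\<bar> \<le> K"
        obtain m where hm: "hit T (E' k) x = enat m" using elim(2) by blast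
        have mn0: "m > n0" using xH hm elim(3) by auto
        have ih: "ind_hit T Y (E' k) x = enat (cnt T Y x m)"
          unfolding ind_hit_def by (rule ind_hit_count[OF elim(1) E'_sub hm])
        define s where "s = bsum (indicator Y) m (T x)"
        have cs: "real (cnt T Y x m) = s" unfolding s_def by (rule cnt_bsum)
        have sb: "\<bar>s - c * m\<bar> \<le> c * \<rho> * m" using xZ mn0 elim(3) unfolding Z_def s_def c_def by (auto simp: not_less)
        define u where "u = ?q * m"
        have u0: "u \<ge> 0" unfolding u_def by simp
        have Fx: "scale ?q (hit T (E' k) x) = ereal u" unfolding hm u_def by simp
        have Gx: "scale (?q / prob Y) (ind_hit T Y (E' k) x) = ereal (?q / c * s)" using cs by (simp add: ih c_def)
        have up: "?q / c * s \<le> u + \<rho> * u"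
        proof -
          have "s \<le> c * m + c * \<rho> * m" using sb by (auto simp: abs_le_iff)
          then have "?q / c * s \<le> ?q / c * (c * m + c * \<rho> * m)" using q c by (intro mult_left_mono) auto
          also have "\<dots> = u + \<rho> * u" unfolding u_def using c by (simp add: field_simps)
          finally show ?thesis .
        qed
        have lo: "u - \<rho> * u \<le> ?q / c * s"
        proof -
          have "c * m - c * \<rho> * m \<le> s" using sb by (auto simp: abs_le_iff)
          then have "?q / c * (c * m - c * \<rho> * m) \<le> ?q / c * s" using q c by (intro mult_left_mono) auto
          moreover have "?q / c * (c * m - c * \<rho> * m) = u - \<rho> * u" unfolding u_def using c by (simp add: field_simps)
          ultimately show ?thesis by simp
        qed
        have "\<rho> * u \<le> (1/2) * u" using rho(2) u0 by (rule mult_right_mono)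
        then have ru: "\<rho> * u \<le> u / 2" by simp
        show "(x \<in> ?G t \<longrightarrow> x \<in> ?F (t + \<delta>)) \<and> (x \<in> ?F t \<longrightarrow> x \<in> ?G (t + \<delta>))"
        proof (intro conjI impI)
          assume "x \<in> ?G t"
          then have g: "?q / c * s \<le> t" using Gx by simp
          have "u \<le> 2 * t" using lo g ru by linarith
          then have "u \<le> 2 * (\<bar>K\<bar> + 1)" using tK abs_ge_self[of t] abs_ge_self[of K] by (smt (verit))
          then have "\<rho> * u \<le> \<rho> * (2 * (\<bar>K\<bar> + 1))" using rho(1) by (intro mult_left_mono) auto
          then have "u \<le> t + \<delta>" using lo g rho(3) by linarith
          then show "x \<in> ?F (t + \<delta>)" using Fx elim(3) unfolding Bset_def by simp
        next
          assume "x \<in> ?F t"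
          then have f: "u \<le> t" using Fx unfolding Bset_def by simp
          then have "u \<le> 2 * (\<bar>K\<bar> + 1)" using tK abs_ge_self[of t] abs_ge_self[of K] by (smt (verit))
          then have "\<rho> * u \<le> \<rho> * (2 * (\<bar>K\<bar> + 1))" using rho(1) by (intro mult_left_mono) auto
          then have "?q / c * s \<le> t + \<delta>" using up f rho(3) by linarith
          then show "x \<in> ?G (t + \<delta>)" using Gx elim(3) by simp
        qed
      qed
    qed
    have pH: "prob ?H \<le> n0 * ?q" by (rule hit_le_prob[OF E'_meas])
    have sm: "prob (Z n0) + prob ?H < \<eta> * c" using n0 pH elim by linarith
    have gen: "measure MY A1 \<le> measure MY A2 + \<eta>"
      if A1: "A1 \<in> sets M" and A2: "A2 \<in> sets M" and imp: "AE x in M. x \<in> Y \<longrightarrow> x \<notin> Z n0 \<longrightarrow> x \<notin> ?H \<longrightarrow> x \<in> A1 \<longrightarrow> x \<in> A2"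
      for A1 A2
    proof -
      have "prob (Y \<inter> A1) \<le> prob ((Y \<inter> A2) \<union> Z n0 \<union> ?H)"
      proof (rule finite_measure_mono_AE)
        show "AE x in M. x \<in> Y \<inter> A1 \<longrightarrow> x \<in> (Y \<inter> A2) \<union> Z n0 \<union> ?H" using imp by eventually_elim auto
        show "(Y \<inter> A2) \<union> Z n0 \<union> ?H \<in> sets M" using A2 Hm by auto
      qed
      also have "\<dots> \<le> prob (Y \<inter> A2) + prob (Z n0) + prob ?H"
        using Hm A2 by (intro prob_mono_union3[OF prob_space_axioms]) auto
      finally have "prob (Y \<inter> A1) \<le> prob (Y \<inter> A2) + c * \<eta>" using sm by (simp add: algebra_simps)
      then have "prob (Y \<inter> A1) / c \<le> prob (Y \<inter> A2) / c + \<eta>" using c by (simp add: field_simps)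
      then show ?thesis using MY_meas[OF A1] MY_meas[OF A2] c_def by simp
    qed
    show ?case
    proof (intro allI impI conjI)
      fix t assume tK: "\<bar>t\<bar> \<le> K"
      show "measure MY (?G t) \<le> measure MY (?F (t + \<delta>)) + \<eta>"
        by (rule gen[OF Gm Bset_meas[OF E'_meas]]) (use pt[of t] tK in auto)
      show "measure MY (?F t) \<le> measure MY (?G (t + \<delta>)) + \<eta>"
        by (rule gen[OF Bset_meas[OF E'_meas] Gm]) (use pt[of t] tK in auto)
    qed
  qed
qed

end




theorem mainTheorem2:
  fixes M :: "'a measure" and T :: "'a \<Rightarrow> 'a"
    and E E' :: "nat \<Rightarrow> 'a set" and Y :: "'a set"
    and N :: "'b measure" and R :: "'b \<Rightarrow> ereal"
  assumes erg: "ergodic_pps M T"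
    and E_meas: "\<And>k. E k \<in> sets M"
    and E_pos: "\<And>k. measure M (E k) > 0"
    and E_lim: "(\<lambda>k. measure M (E k)) \<longlonglongrightarrow> 0"
    and Y_meas: "Y \<in> sets M" and Y_pos: "measure M Y > 0"
    and E'_meas: "\<And>k. E' k \<in> sets M"
    and E'_sub: "\<And>k. E' k \<subseteq> Y"
    and via: "\<And>k. reach_only_via M T Y (E k) (E' k)"
    and N_prob: "prob_space N"
    and R_meas: "R \<in> borel_measurable N"
    and R_nonneg: "\<And>\<omega>. \<omega> \<in> space N \<Longrightarrow> R \<omega> \<ge> 0"
  shows
    "(tendsto_zero_in_measure (uniform_measure M Y)
        (\<lambda>k x. scaled_diff (measure M (E' k)) (hit T (E k) x) (hit T (E' k) x))
      \<longrightarrow> ((\<lambda>k. measure M (E' k)) \<longlonglongrightarrow> 0) \<and>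
          (conv_in_law (uniform_measure M Y)
             (\<lambda>k x. scale (measure M (E' k) / measure M Y) (ind_hit T Y (E' k) x)) N R
           \<longleftrightarrow> conv_in_law M (\<lambda>k x. scale (measure M (E' k)) (hit T (E k) x)) N R))
     \<and>
     ((\<exists>m0::nat. \<forall>k. E' k \<subseteq> (\<Union>m\<le>m0. (T ^^ m) -` (E k) \<inter> space M))
      \<longrightarrow> tendsto_zero_in_measure (uniform_measure M Y)
            (\<lambda>k x. scaled_diff (measure M (E' k)) (hit T (E k) x) (hit T (E' k) x)))"
proof -
  have pM: "prob_space M" and Tm: "T \<in> M \<rightarrow>\<^sub>M M" and Tinv: "distr M M T = M"
    and ergA: "\<And>A. A \<in> sets M \<Longrightarrow> T -` A \<inter> space M = A \<Longrightarrow> measure M A = 0 \<or> measure M A = 1"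
    using erg unfolding ergodic_pps_def mpt_def by auto
  have es: "erg_sys M T" by (rule erg_sys.intro[OF pM]) (rule erg_sys_axioms.intro[OF Tm Tinv ergA])
  interpret ps M T E E' Y
    by (rule ps.intro[OF es], rule ps_axioms.intro) (use E_meas E_pos E_lim Y_meas Y_pos E'_meas E'_sub via in auto)
  have dd_eq: "(\<lambda>k x. scaled_diff (measure M (E' k)) (hit T (E k) x) (hit T (E' k) x)) = dd"
    by (intro ext) (simp add: dd_def)
  have mono: "mono (dist_fun N R)" by (rule dist_fun_mono[OF N_prob R_meas])
  have partA: "tendsto_zero_in_measure (uniform_measure M Y)
        (\<lambda>k x. scaled_diff (measure M (E' k)) (hit T (E k) x) (hit T (E' k) x))
      \<longrightarrow> ((\<lambda>k. measure M (E' k)) \<longlonglongrightarrow> 0) \<and>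
          (conv_in_law (uniform_measure M Y)
             (\<lambda>k x. scale (measure M (E' k) / measure M Y) (ind_hit T Y (E' k) x)) N R
           \<longleftrightarrow> conv_in_law M (\<lambda>k x. scale (measure M (E' k)) (hit T (E k) x)) N R)"
  proof
    assume cond0: "tendsto_zero_in_measure (uniform_measure M Y)
        (\<lambda>k x. scaled_diff (measure M (E' k)) (hit T (E k) x) (hit T (E' k) x))"
    then have cond: "tendsto_zero_in_measure MY dd" unfolding dd_eq .
    have p0: "(\<lambda>k. prob (E' k)) \<longlonglongrightarrow> 0" by (rule part_a1[OF cond])
    have eq3: "conv_in_law MY (\<lambda>k x. scale (prob (E' k) / prob Y) (ind_hit T Y (E' k) x)) N R
        \<longleftrightarrow> conv_in_law MY (\<lambda>k x. scale (prob (E' k)) (hit T (E' k) x)) N R"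
    proof (rule conv_in_law_close[OF mono])
      fix \<delta> \<eta> K :: real assume d: "\<delta> > 0" and h: "\<eta> > 0"
      show "eventually (\<lambda>k. \<forall>t. \<bar>t\<bar> \<le> K \<longrightarrow>
          measure MY {x\<in>space MY. scale (prob (E' k) / prob Y) (ind_hit T Y (E' k) x) \<le> ereal t}
          \<le> measure MY {x\<in>space MY. scale (prob (E' k)) (hit T (E' k) x) \<le> ereal (t + \<delta>)} + \<eta>) sequentially"
        using close_iii[OF p0 d h, of K] by eventually_elim (simp add: Bset_def)
      show "eventually (\<lambda>k. \<forall>t. \<bar>t\<bar> \<le> K \<longrightarrow>
          measure MY {x\<in>space MY. scale (prob (E' k)) (hit T (E' k) x) \<le> ereal t}
          \<le> measure MY {x\<in>space MY. scale (prob (E' k) / prob Y) (ind_hit T Y (E' k) x) \<le> ereal (t + \<delta>)} + \<eta>) sequentially"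
        using close_iii[OF p0 d h, of K] by eventually_elim (simp add: Bset_def)
    qed
    have eq1: "conv_in_law MY (\<lambda>k x. scale (prob (E' k)) (hit T (E' k) x)) N R
        \<longleftrightarrow> conv_in_law MY (\<lambda>k x. scale (prob (E' k)) (hit T (E k) x)) N R"
    proof (rule conv_in_law_close[OF mono])
      fix \<delta> \<eta> K :: real assume d: "\<delta> > 0" and h: "\<eta> > 0"
      show "eventually (\<lambda>k. \<forall>t. \<bar>t\<bar> \<le> K \<longrightarrow>
          measure MY {x\<in>space MY. scale (prob (E' k)) (hit T (E' k) x) \<le> ereal t}
          \<le> measure MY {x\<in>space MY. scale (prob (E' k)) (hit T (E k) x) \<le> ereal (t + \<delta>)} + \<eta>) sequentially"
        by (rule close_i(2)[OF cond d h])
      show "eventually (\<lambda>k. \<forall>t. \<bar>t\<bar> \<le> K \<longrightarrow>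
          measure MY {x\<in>space MY. scale (prob (E' k)) (hit T (E k) x) \<le> ereal t}
          \<le> measure MY {x\<in>space MY. scale (prob (E' k)) (hit T (E' k) x) \<le> ereal (t + \<delta>)} + \<eta>) sequentially"
        by (rule close_i(1)[OF cond d h])
    qed
    have eq2: "conv_in_law MY (\<lambda>k x. scale (prob (E' k)) (hit T (E k) x)) N R
        \<longleftrightarrow> conv_in_law M (\<lambda>k x. scale (prob (E' k)) (hit T (E k) x)) N R"
    proof (rule conv_in_law_close[OF mono])
      fix \<delta> \<eta> K :: real assume d: "\<delta> > 0" and h: "\<eta> > 0"
      show "eventually (\<lambda>k. \<forall>t. \<bar>t\<bar> \<le> K \<longrightarrow>
          measure MY {x\<in>space MY. scale (prob (E' k)) (hit T (E k) x) \<le> ereal t}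
          \<le> measure M {x\<in>space M. scale (prob (E' k)) (hit T (E k) x) \<le> ereal (t + \<delta>)} + \<eta>) sequentially"
        using close_ii[OF p0 d h] by eventually_elim (simp add: Bset_def)
      show "eventually (\<lambda>k. \<forall>t. \<bar>t\<bar> \<le> K \<longrightarrow>
          measure M {x\<in>space M. scale (prob (E' k)) (hit T (E k) x) \<le> ereal t}
          \<le> measure MY {x\<in>space MY. scale (prob (E' k)) (hit T (E k) x) \<le> ereal (t + \<delta>)} + \<eta>) sequentially"
        using close_ii[OF p0 d h] by eventually_elim (simp add: Bset_def)
    qed
    show "((\<lambda>k. measure M (E' k)) \<longlonglongrightarrow> 0) \<and>
          (conv_in_law (uniform_measure M Y)
             (\<lambda>k x. scale (measure M (E' k) / measure M Y) (ind_hit T Y (E' k) x)) N R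
           \<longleftrightarrow> conv_in_law M (\<lambda>k x. scale (measure M (E' k)) (hit T (E k) x)) N R)"
      using p0 eq1 eq2 eq3 by simp
  qed
  have partB: "(\<exists>m0::nat. \<forall>k. E' k \<subseteq> (\<Union>m\<le>m0. (T ^^ m) -` (E k) \<inter> space M))
      \<longrightarrow> tendsto_zero_in_measure (uniform_measure M Y)
            (\<lambda>k x. scaled_diff (measure M (E' k)) (hit T (E k) x) (hit T (E' k) x))"
  proof
    assume "\<exists>m0::nat. \<forall>k. E' k \<subseteq> (\<Union>m\<le>m0. (T ^^ m) -` (E k) \<inter> space M)"
    then obtain m0 where m0: "\<forall>k. E' k \<subseteq> (\<Union>m\<le>m0. (T ^^ m) -` (E k) \<inter> space M)" by blast
    show "tendsto_zero_in_measure (uniform_measure M Y)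
            (\<lambda>k x. scaled_diff (measure M (E' k)) (hit T (E k) x) (hit T (E' k) x))"
      unfolding dd_eq by (rule part_b[OF m0])
  qed
  show ?thesis using partA partB by blast
qed



end
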